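(* Let $q_1,\dots,q_k$ be real polynomials, all of the same degree $m\ge1$, with $q_i(x)\to\infty$ as $x\to\infty$; write $a^{(i)}_m>0$ for the leading coefficient of $q_i$ and $c_{i,j}=(a^{(j)}_m/a^{(i)}_m)^{1/m}$. Let $1\le t_1<\dots<t_u\le k$. Then there exist integers $M=M(t_1,\dots,t_u)\ge0$ and $a=a(t_1,\dots,t_u)>0$ with $a\ge M$ such that $$\lim_{r\to\infty}\frac1r\Big|\Big\{1\le n\le r:\ q_{t_1}(n)\in\bigcap_{i=1}^u q_{t_i}(\mathbb N)\Big\}\Big|=\frac{M(t_1,\dots,t_u)}{a(t_1,\dots,t_u)},$$ where for $u=1$, $M=a=1$. Moreover, for $u>1$: (1) If for every $2\le i\le u$ one has $c_{t_i,t_1}=\beta_i/\alpha_i\in\mathbb Q$ with coprime positive integers $\alpha_i,\beta_i$, and there is $x_i\in\mathbb Q$ with $q_{t_i}(y)=q_{t_1}(c_{t_1,t_i}(y-x_i))$ for all $y\in\mathbb R$, then $a(t_1,\dots,t_u)=\mathrm{lcm}(\alpha_2,\dots,\alpha_u)$ and $M(t_1,\dots,t_u)=|(W_2\times\dots\times W_u)\cap V|$, where $W_i=\{0,1,\dots,\alpha_i-1\}\cap\frac{\alpha_i}{\beta_i}(\mathbb Z-x_i)$ and $V=\{(w_2,\dots,w_u): w_i-w_j\in\alpha_j\mathbb N-\alpha_i\mathbb N\ \forall i,j\}$ (i.e. the tuples for which the congruences $n\equiv w_i \pmod{\alpha_i}$, $2\le i\le u$, have a common solution). (2) If $c_{t_i,t_1}\notin\mathbb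 Q$ for some $i$, or $c_{t_i,t_1}\in\mathbb Q$ but for some $2\le i\le u$ no $x_i\in\mathbb Q$ satisfies the identity in (1), then $M(t_1,\dots,t_u)=0$. (3) Let $R$ be such that all $q_i$ are strictly increasing on $[R,\infty)$, put $A_i=q_1^{-1}(q_i(\mathbb N))$ (preimages taken in $[R,\infty)$) and $A=\bigcup_{i=1}^kA_i$. Then $$\lim_{r\to\infty}\frac{|\bigcap_{j=1}^uA_{t_j}\cap[1,r]|}r=c_{t_1,1}\frac{M(t_1,\dots,t_u)}{a(t_1,\dots,t_u)},$$ and $$\lim_{r\to\infty}\frac{|A\cap[1,r]|}r=\sum_{u=1}^k(-1)^{u+1}\sum_{1\le t_1<\dots<t_u\le k}c_{t_1,1}\frac{M(t_1,\dots,t_u)}{a(t_1,\dots,t_u)}=:c\ge1.$$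
   Context: $|\Gamma|$ denotes the cardinality of a finite set $\Gamma$; $\mathbb N$ is the set of positive integers. *)

theory Defs
  imports Complex_Main "HOL-Library.FuncSet" "HOL-Computational_Algebra.Polynomial"
begin

definition cc :: "(nat \<Rightarrow> real poly) \<Rightarrow> nat \<Rightarrow> nat \<Rightarrow> nat \<Rightarrow> real" where
  "cc q m i j = (lead_coeff (q j) / lead_coeff (q i)) powr (1 / real m)"

definition polyvals :: "real poly \<Rightarrow> real set" where
  "polyvals p = {poly p (real l) | l. l \<ge> 1}"

definition Aset :: "(nat \<Rightarrow> real poly) \<Rightarrow> real \<Rightarrow> nat \<Rightarrow> real set" where
  "Aset q R i = {x. R \<le> x \<and> poly (q 1) x \<in> polyvals (q i)}"

definition Wset :: "nat \<Rightarrow> nat \<Rightarrow> real \<Rightarrow> int set" where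
  "Wset \<alpha> \<beta> x = {w. 0 \<le> w \<and> w < int \<alpha> \<and>
      (\<exists>z::int. real_of_int w = (real \<alpha> / real \<beta>) * (real_of_int z - x))}"

definition diffset :: "nat \<Rightarrow> nat \<Rightarrow> int set" where
  "diffset aj ai = {int aj * int s - int ai * int t | s t. s \<ge> 1 \<and> t \<ge> 1}"

end

theory Submission
  imports Defs
begin



lemma poly_bound_coeffs:
  fixes g :: "real poly" and n :: nat
  assumes "\<forall>i\<ge>n. coeff g i = 0"
  shows "\<exists>C\<ge>0. \<forall>y\<ge>1. \<bar>poly g y\<bar> * y \<le> C * y ^ n"
proof (cases "n = 0")
  case True
  then have "g = 0" using assms by (auto intro: poly_eqI)
  then show ?thesis by (intro exI[of _ 0]) auto
next
  case False
  have dg: "degree g \<le> n - 1"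
    using assms False by (intro degree_le) auto
  define C where "C = (\<Sum>i\<le>degree g. \<bar>coeff g i\<bar>)"
  show ?thesis
  proof (intro exI conjI allI impI)
    show "C \<ge> 0" unfolding C_def by (intro sum_nonneg) auto
    fix y :: real assume y: "y \<ge> 1"
    have "\<bar>poly g y\<bar> * y = \<bar>\<Sum>i\<le>degree g. coeff g i * y ^ i * y\<bar>"
      using y by (simp add: poly_altdef sum_distrib_right[symmetric] abs_mult)
    also have "\<dots> \<le> (\<Sum>i\<le>degree g. \<bar>coeff g i * y ^ i * y\<bar>)"
      by (rule sum_abs)
    also have "\<dots> \<le> (\<Sum>i\<le>degree g. \<bar>coeff g i\<bar> * y ^ n)"
    proof (rule sum_mono)
      fix i assume i: "i \<in> {..degree g}"
      have "y ^ i * y = y ^ (Suc i)" by simp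
      also have "\<dots> \<le> y ^ n" using y i dg False by (intro power_increasing) auto
      finally have "y ^ i * y \<le> y ^ n" .
      then show "\<bar>coeff g i * y ^ i * y\<bar> \<le> \<bar>coeff g i\<bar> * y ^ n"
        using y by (simp add: abs_mult mult.assoc mult_left_mono)
    qed
    also have "\<dots> = C * y ^ n" unfolding C_def by (simp add: sum_distrib_right)
    finally show "\<bar>poly g y\<bar> * y \<le> C * y ^ n" .
  qed
qed

lemma poly_bound_deg:
  fixes g :: "real poly"
  assumes "degree g \<le> n"
  shows "\<exists>C\<ge>0. \<forall>y\<ge>1. \<bar>poly g y\<bar> \<le> C * y ^ n"
proof -
  have "\<forall>i\<ge>Suc n. coeff g i = 0" using assms by (auto intro: coeff_eq_0)
  from poly_bound_coeffs[OF this] obtain C where C: "C \<ge> 0" "\<forall>y\<ge>1. \<bar>poly g y\<bar> * y \<le> C * y ^ Suc n"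
    by blast
  show ?thesis
  proof (intro exI conjI allI impI)
    fix y :: real assume y: "y \<ge> 1"
    have "\<bar>poly g y\<bar> * y \<le> (C * y ^ n) * y" using C y by (simp add: mult_ac)
    then show "\<bar>poly g y\<bar> \<le> C * y ^ n" using y by simp
  qed (use C in auto)
qed

lemma poly_lower_bound:
  fixes r :: "real poly"
  assumes L: "lead_coeff r > 0"
  shows "\<exists>Z\<ge>1. \<forall>z\<ge>Z. poly r z \<ge> lead_coeff r / 2 * z ^ degree r"
proof -
  define j where "j = degree r"
  define L where "L = lead_coeff r"
  define s where "s = r - monom L j"
  have "\<forall>i\<ge>j. coeff s i = 0"
    unfolding s_def L_def j_def by (auto simp: coeff_monom coeff_eq_0)
  from poly_bound_coeffs[OF this] obtain C where C: "C \<ge> 0" "\<forall>y\<ge>1. \<bar>poly s y\<bar> * y \<le> C * y ^ j"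
    by blast
  have Lp: "L > 0" using L L_def by simp
  show ?thesis
  proof (intro exI conjI allI impI)
    show "max 1 (2 * C / L) \<ge> 1" by simp
    fix z :: real assume z: "max 1 (2 * C / L) \<le> z"
    then have z1: "z \<ge> 1" and z2: "2 * C / L \<le> z" by auto
    have pr: "poly r z = L * z ^ j + poly s z" unfolding s_def by (simp add: poly_monom)
    have "\<bar>poly s z\<bar> * z \<le> C * z ^ j" using C z1 by auto
    moreover have "C * z ^ j \<le> (L / 2 * z) * z ^ j"
      using z2 Lp z1 by (intro mult_right_mono) (auto simp: field_simps)
    ultimately have "\<bar>poly s z\<bar> * z \<le> (L / 2 * z ^ j) * z" by (simp add: mult_ac)
    then have "\<bar>poly s z\<bar> \<le> L / 2 * z ^ j" using z1 by simp
    then have "poly r z \<ge> L / 2 * z ^ j" using pr by linarith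
    then show "poly r z \<ge> lead_coeff r / 2 * z ^ degree r" by (simp add: L_def j_def)
  qed
qed




lemma lin_pow_coeff_gt:
  fixes c d :: real
  assumes "i > j"
  shows "coeff ([:d,c:]^j) i = 0"
proof -
  have "degree ([:d,c:]^j) \<le> degree [:d,c:] * j" by (rule degree_power_le)
  also have "\<dots> \<le> j" by simp
  finally show ?thesis using assms by (intro coeff_eq_0) auto
qed

lemma lin_mult_coeff:
  fixes c d :: real
  shows "coeff ([:d,c:] * p) i = d * coeff p i + (case i of 0 \<Rightarrow> 0 | Suc i' \<Rightarrow> c * coeff p i')"
  by (simp add: mult_pCons_left coeff_pCons split: nat.splits)

lemma lin_pow_coeff_eq:
  fixes c d :: real
  shows "coeff ([:d,c:]^j) j = c ^ j"
proof (induction j)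
  case 0 then show ?case by simp
next
  case (Suc j)
  have "coeff ([:d,c:]^Suc j) (Suc j) = d * coeff ([:d,c:]^j) (Suc j) + c * coeff ([:d,c:]^j) j"
    by (simp only: power_Suc lin_mult_coeff) simp
  also have "\<dots> = c ^ Suc j" using Suc lin_pow_coeff_gt[of j "Suc j" d c] by simp
  finally show ?case .
qed

lemma lin_pow_coeff_pred:
  fixes c d :: real
  shows "coeff ([:d,c:]^Suc j) j = real (Suc j) * c ^ j * d"
proof (induction j)
  case 0 then show ?case by simp
next
  case (Suc j)
  have "coeff ([:d,c:]^Suc (Suc j)) (Suc j) = d * coeff ([:d,c:]^Suc j) (Suc j) + c * coeff ([:d,c:]^Suc j) j"
    by (simp only: power_Suc[of _ "Suc j"] lin_mult_coeff) simp
  also have "\<dots> = d * c ^ Suc j + c * (real (Suc j) * c ^ j * d)"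
    using Suc lin_pow_coeff_eq[of d c "Suc j"] by simp
  also have "\<dots> = real (Suc (Suc j)) * c ^ Suc j * d" by (simp add: algebra_simps)
  finally show ?case .
qed

lemma pcompose_sum_form:
  fixes Q r :: "real poly"
  shows "pcompose Q r = (\<Sum>i\<le>degree Q. smult (coeff Q i) (r ^ i))"
proof -
  have "pcompose Q r = poly (map_poly (\<lambda>x. [:x:]) Q) r" by (rule pcompose_altdef)
  also have "\<dots> = (\<Sum>i\<le>degree (map_poly (\<lambda>x. [:x:]) Q). coeff (map_poly (\<lambda>x. [:x:]) Q) i * r ^ i)"
    by (rule poly_altdef)
  also have "degree (map_poly (\<lambda>x. [:x:]) Q) = degree Q"
    by (rule degree_map_poly) auto
  finally show ?thesis by (simp add: coeff_map_poly)
qed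

lemma coeff_pcompose_lin:
  fixes Q :: "real poly" and c d :: real
  shows "coeff (pcompose Q [:d,c:]) k = (\<Sum>i\<le>degree Q. coeff Q i * coeff ([:d,c:]^i) k)"
  by (simp add: pcompose_sum_form coeff_sum)

lemma coeff_pcompose_lin_top:
  fixes Q :: "real poly" and c d :: real
  assumes "degree Q = Suc m'"
  shows "coeff (pcompose Q [:d,c:]) (Suc m') = coeff Q (Suc m') * c ^ Suc m'"
    and "coeff (pcompose Q [:d,c:]) m' = coeff Q m' * c ^ m' + coeff Q (Suc m') * real (Suc m') * c ^ m' * d"
    and "\<And>k. k > Suc m' \<Longrightarrow> coeff (pcompose Q [:d,c:]) k = 0"
proof -
  show "coeff (pcompose Q [:d,c:]) (Suc m') = coeff Q (Suc m') * c ^ Suc m'"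
    unfolding coeff_pcompose_lin assms sum.atMost_Suc
    by (simp add: lin_pow_coeff_eq lin_pow_coeff_gt)
  have z: "(\<Sum>i<m'. coeff Q i * coeff ([:d,c:]^i) m') = 0"
    by (intro sum.neutral) (auto simp: lin_pow_coeff_gt)
  show "coeff (pcompose Q [:d,c:]) m' = coeff Q m' * c ^ m' + coeff Q (Suc m') * real (Suc m') * c ^ m' * d"
    unfolding coeff_pcompose_lin assms sum.atMost_Suc lessThan_Suc_atMost[symmetric] sum.lessThan_Suc z
    by (simp only: lin_pow_coeff_eq lin_pow_coeff_pred add_0_left mult.assoc)
  fix k assume "k > Suc m'"
  then show "coeff (pcompose Q [:d,c:]) k = 0"
    unfolding coeff_pcompose_lin assms
    by (intro sum.neutral) (auto simp: lin_pow_coeff_gt)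
qed




lemma powr_root_pow:
  fixes x :: real assumes "x > 0" "m \<ge> 1"
  shows "(x powr (1 / real m)) ^ m = x"
proof -
  have "(x powr (1 / real m)) ^ m = (x powr (1 / real m)) powr real m"
    using assms by (simp add: powr_realpow)
  also have "\<dots> = x powr (1 / real m * real m)" by (simp add: powr_powr)
  also have "\<dots> = x" using assms by simp
  finally show ?thesis .
qed

lemma mono_est:
  fixes Q :: "real poly" and \<kappa> Z :: real and m :: nat
  assumes Z: "Z \<ge> 1" and der: "\<forall>z\<ge>Z. poly (pderiv Q) z \<ge> \<kappa> * z ^ (m - 1)" and k: "\<kappa> > 0"
    and v: "Z \<le> v" "v \<le> u"
  shows "poly Q u - poly Q v \<ge> \<kappa> * v ^ (m - 1) * (u - v)"
proof (cases "v = u")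
  case True then show ?thesis by simp
next
  case False
  then have "v < u" using v by simp
  from MVT2[OF this, of "poly Q" "poly (pderiv Q)"] obtain z where
    z: "v < z" "z < u" "poly Q u - poly Q v = (u - v) * poly (pderiv Q) z"
    using poly_DERIV by blast
  have "\<kappa> * v ^ (m - 1) \<le> \<kappa> * z ^ (m - 1)"
    using v z Z k by (intro mult_left_mono power_mono) auto
  also have "\<dots> \<le> poly (pderiv Q) z" using der z v by auto
  finally show ?thesis using z \<open>v < u\<close> by (simp add: mult.commute mult_right_mono)
qed

lemma close_lemma:
  fixes P Q :: "real poly" and m :: nat
  assumes m: "m \<ge> 1" and dP: "degree P = m" and dQ: "degree Q = m"
    and A: "lead_coeff P > 0" and B: "lead_coeff Q > 0"
  defines "c \<equiv> (lead_coeff P / lead_coeff Q) powr (1 / real m)"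
  shows "\<exists>d Z S K. Z \<ge> 1 \<and> S \<ge> 1 \<and> K \<ge> 0 \<and> strict_mono_on {Z..} (poly Q) \<and>
     (\<forall>s\<ge>S. \<forall>y\<ge>1. poly Q y = poly P s \<longrightarrow> y \<ge> Z \<and> \<bar>y - (c * s + d)\<bar> \<le> K / s) \<and>
     (\<forall>s\<ge>S. \<exists>y\<ge>Z. poly Q y = poly P s) \<and> (\<forall>s\<ge>S. K / s \<le> 1/2) \<and> (\<forall>s\<ge>S. c * s + d - 1 \<ge> Z)"
proof -
  obtain m' where m': "m = Suc m'" using m by (cases m) auto
  define a where "a = lead_coeff P"
  define b where "b = lead_coeff Q"
  have a0: "a > 0" and b0: "b > 0" using A B a_def b_def by auto
  have c0: "c > 0" unfolding c_def using A B by (auto simp: divide_pos_pos)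
  have cm: "c ^ m = a / b" unfolding c_def a_def b_def using A B m by (intro powr_root_pow) auto
  define d where "d = (coeff P m' - coeff Q m' * c ^ m') / (b * real m * c ^ m')"
  define G where "G = pcompose Q [:d,c:] - P"
  have cQm: "coeff Q m = b" and cPm: "coeff P m = a" using dP dQ a_def b_def by auto
  have dQ': "degree Q = Suc m'" using dQ m' by simp
  have Gc: "\<forall>i\<ge>m'. coeff G i = 0"
  proof (intro allI impI)
    fix i assume i: "i \<ge> m'"
    consider "i = m'" | "i = Suc m'" | "i > Suc m'" using i by linarith
    then show "coeff G i = 0"
    proof cases
      case 1
      have "b * real m * c ^ m' \<noteq> 0" using b0 c0 m by simp
      then have "coeff Q (Suc m') * real (Suc m') * c ^ m' * d = coeff P m' - coeff Q m' * c ^ m'"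
        unfolding d_def using cQm m' by (simp add: field_simps)
      then show ?thesis unfolding G_def using 1 coeff_pcompose_lin_top(2)[OF dQ', of d c] by simp
    next
      case 2
      have "coeff Q (Suc m') * c ^ Suc m' = coeff P (Suc m')"
        using cQm cPm cm m' b0 by (simp add: field_simps)
      then show ?thesis unfolding G_def using 2 coeff_pcompose_lin_top(1)[OF dQ', of d c] by simp
    next
      case 3
      then show ?thesis unfolding G_def using coeff_pcompose_lin_top(3)[OF dQ', of i d c] dP m'
        by (simp add: coeff_eq_0)
    qed
  qed
  from poly_bound_coeffs[OF Gc] obtain CG where CG: "CG \<ge> 0" "\<forall>y\<ge>1. \<bar>poly G y\<bar> * y \<le> CG * y ^ m'"
    by blast
  have polyG: "poly G s = poly Q (c * s + d) - poly P s" for s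
    unfolding G_def by (simp add: poly_pcompose algebra_simps)
  have ldQ: "lead_coeff (pderiv Q) = real m * b"
    using dQ' by (simp add: degree_pderiv coeff_pderiv m' b_def)
  define \<kappa> where "\<kappa> = real m * b / 2"
  have k0: "\<kappa> > 0" unfolding \<kappa>_def using b0 m by simp
  obtain Z where Z: "Z \<ge> 1" "\<forall>z\<ge>Z. poly (pderiv Q) z \<ge> \<kappa> * z ^ (m - 1)"
    using poly_lower_bound[of "pderiv Q"] ldQ b0 m dQ by (auto simp: degree_pderiv \<kappa>_def)
  have ME: "poly Q u - poly Q v \<ge> \<kappa> * v ^ (m - 1) * (u - v)" if "Z \<le> v" "v \<le> u" for u v
    by (rule mono_est[OF Z(1) Z(2) k0 that])
  have smono: "strict_mono_on {Z..} (poly Q)"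
  proof (rule strict_mono_onI)
    fix v u assume "v \<in> {Z..}" "u \<in> {Z..}" "v < u"
    then have "\<kappa> * v ^ (m - 1) * (u - v) > 0" using Z k0 by auto
    with ME[of v u] \<open>v \<in> {Z..}\<close> \<open>v < u\<close> show "poly Q v < poly Q u" by auto
  qed
  obtain CQ where CQ: "CQ \<ge> 0" "\<forall>y\<ge>1. \<bar>poly Q y\<bar> \<le> CQ * y ^ m"
    using poly_bound_deg[of Q m] dQ by auto
  define QB where "QB = CQ * Z ^ m"
  have QBb: "\<bar>poly Q y\<bar> \<le> QB" if "1 \<le> y" "y \<le> Z" for y
  proof -
    have "\<bar>poly Q y\<bar> \<le> CQ * y ^ m" using CQ that by auto
    also have "\<dots> \<le> CQ * Z ^ m" using that CQ by (intro mult_left_mono power_mono) auto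
    finally show ?thesis unfolding QB_def .
  qed
  obtain Z2 where Z2: "Z2 \<ge> 1" "\<forall>s\<ge>Z2. poly P s \<ge> a / 2 * s ^ m"
    using poly_lower_bound[of P] A dP a_def by auto
  define \<theta> where "\<theta> = c / 2"
  have th0: "\<theta> > 0" unfolding \<theta>_def using c0 by simp
  define K where "K = CG / (\<kappa> * \<theta> ^ m')"
  have K0: "K \<ge> 0" unfolding K_def using CG k0 th0 by simp
  define S where "S = max (max Z2 (2 * QB / a + 1)) (max ((2 / c) * (\<bar>d\<bar> + 1 + Z)) (2 * K + 1))"
  have S1: "S \<ge> 1" unfolding S_def using Z2 by simp
  have SP: "poly P s > QB" if "s \<ge> S" for s
  proof -
    have s: "s \<ge> Z2" "s \<ge> 2 * QB / a + 1" using that unfolding S_def by auto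
    have "s ^ m \<ge> s" using s Z2 m by (metis power_one_right power_increasing order_trans)
    then have "a / 2 * s ^ m \<ge> a / 2 * s" using a0 by simp
    moreover have "a / 2 * s > QB" using s a0 by (simp add: field_simps)
    ultimately show ?thesis using Z2 s by force
  qed
  have Su: "c * s + d - 1 \<ge> \<theta> * s \<and> \<theta> * s \<ge> Z" if "s \<ge> S" for s
  proof -
    have s: "s \<ge> (2 / c) * (\<bar>d\<bar> + 1 + Z)" using that unfolding S_def by auto
    then have "c * s \<ge> 2 * (\<bar>d\<bar> + 1 + Z)" using c0 by (simp add: field_simps)
    then show ?thesis unfolding \<theta>_def using Z by (auto simp: field_simps)
  qed
  have SK: "K / s \<le> 1 / 2" if "s \<ge> S" for s
  proof -
    have s: "s \<ge> 2 * K + 1" using that unfolding S_def by auto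
    then show ?thesis using K0 by (simp add: field_simps)
  qed
  have E0: "\<kappa> * (\<theta> * s) ^ m' > \<bar>poly G s\<bar>" if "s \<ge> S" for s
  proof -
    have s: "s \<ge> 2 * K + 1" "s \<ge> 1" using that S1 unfolding S_def by auto
    have "\<bar>poly G s\<bar> * s \<le> CG * s ^ m'" using CG s by auto
    also have "CG = K * (\<kappa> * \<theta> ^ m')" unfolding K_def using k0 th0 by simp
    also have "K * (\<kappa> * \<theta> ^ m') * s ^ m' < s * (\<kappa> * \<theta> ^ m') * s ^ m'"
      using s k0 th0 K0 by (intro mult_strict_right_mono) auto
    finally have "\<bar>poly G s\<bar> * s < (\<kappa> * (\<theta> * s) ^ m') * s" by (simp add: power_mult_distrib mult_ac)
    then show ?thesis using s by simp
  qed
  have main: "y \<ge> Z \<and> \<bar>y - (c * s + d)\<bar> \<le> K / s"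
    if s: "s \<ge> S" and y: "y \<ge> 1" and eq: "poly Q y = poly P s" for s y
  proof -
    have yZ: "y \<ge> Z"
    proof (rule ccontr)
      assume "\<not> y \<ge> Z"
      then have "\<bar>poly Q y\<bar> \<le> QB" using QBb y by auto
      with SP[OF s] eq show False by auto
    qed
    define u0 where "u0 = c * s + d"
    have u0: "u0 - 1 \<ge> \<theta> * s" "\<theta> * s \<ge> Z" using Su[OF s] u0_def by auto
    have s0: "s \<ge> 1" using s S1 by auto
    have Gs: "poly Q u0 - poly P s = poly G s" using polyG u0_def by simp
    have E: "\<kappa> * (\<theta> * s) ^ m' > \<bar>poly G s\<bar>" using E0[OF s] .
    have pw: "\<kappa> * (\<theta> * s) ^ m' \<le> \<kappa> * w ^ (m - 1)" if "w \<ge> \<theta> * s" for w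
    proof -
      have "0 \<le> \<theta> * s" using th0 s0 by simp
      then have "(\<theta> * s) ^ m' \<le> w ^ m'" using that by (simp add: power_mono)
      then show ?thesis using k0 m' by simp
    qed
    have y1: "y \<le> u0 + 1"
    proof (rule ccontr)
      assume "\<not> y \<le> u0 + 1"
      then have "poly Q y - poly Q u0 \<ge> \<kappa> * u0 ^ (m - 1) * (y - u0)" using ME[of u0 y] u0 by auto
      moreover have "\<kappa> * u0 ^ (m - 1) * (y - u0) \<ge> \<kappa> * u0 ^ (m - 1)"
      proof -
        have "0 \<le> \<kappa> * u0 ^ (m - 1)" using k0 u0 Z by simp
        then show ?thesis using mult_left_mono[of 1 "y - u0" "\<kappa> * u0 ^ (m - 1)"] \<open>\<not> y \<le> u0 + 1\<close> by simp
      qed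
      moreover have "\<kappa> * u0 ^ (m - 1) \<ge> \<kappa> * (\<theta> * s) ^ m'" using pw[of u0] u0 by auto
      ultimately show False using E Gs eq by linarith
    qed
    have y2: "y \<ge> u0 - 1"
    proof (rule ccontr)
      assume "\<not> y \<ge> u0 - 1"
      then have "poly Q (u0 - 1) - poly Q y \<ge> 0"
      proof -
        have "0 \<le> \<kappa> * y ^ (m - 1) * (u0 - 1 - y)" using \<open>\<not> y \<ge> u0 - 1\<close> yZ k0 Z by simp
        then show ?thesis using ME[of y "u0 - 1"] yZ \<open>\<not> y \<ge> u0 - 1\<close> by linarith
      qed
      moreover have "poly Q u0 - poly Q (u0 - 1) \<ge> \<kappa> * (u0 - 1) ^ (m - 1) * 1"
        using ME[of "u0 - 1" u0] u0 by auto
      moreover have "\<kappa> * (u0 - 1) ^ (m - 1) \<ge> \<kappa> * (\<theta> * s) ^ m'" using pw[of "u0 - 1"] u0 by auto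
      ultimately show False using E Gs eq by linarith
    qed
    define v where "v = min y u0"
    define w where "w = max y u0"
    have vw: "v \<ge> \<theta> * s" "Z \<le> v" "v \<le> w" using y1 y2 u0 unfolding v_def w_def by auto
    have "poly Q w - poly Q v \<ge> \<kappa> * v ^ (m - 1) * (w - v)" using ME vw by auto
    moreover have "\<bar>poly Q y - poly Q u0\<bar> = poly Q w - poly Q v"
    proof -
      have "0 \<le> \<kappa> * v ^ (m - 1) * (w - v)" using vw k0 Z by simp
      then have "poly Q w - poly Q v \<ge> 0" using ME vw by force
      then show ?thesis unfolding v_def w_def by (cases "y \<le> u0") (auto simp: min_def max_def)
    qed
    moreover have "w - v = \<bar>y - u0\<bar>" unfolding v_def w_def by auto
    moreover have "\<kappa> * v ^ (m - 1) \<ge> \<kappa> * (\<theta> * s) ^ m'" using pw vw by auto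
    ultimately have "\<kappa> * (\<theta> * s) ^ m' * \<bar>y - u0\<bar> \<le> \<bar>poly G s\<bar>"
      using Gs eq by (smt (verit) mult_right_mono abs_ge_zero)
    also have "\<bar>poly G s\<bar> \<le> CG * s ^ m' / s" using CG s0 by (simp add: field_simps)
    finally have "\<kappa> * (\<theta> * s) ^ m' * \<bar>y - u0\<bar> \<le> CG * s ^ m' / s" .
    then have "\<bar>y - u0\<bar> \<le> CG * s ^ m' / s / (\<kappa> * (\<theta> * s) ^ m')"
      using k0 th0 s0 by (simp add: field_simps)
    also have "\<dots> = K / s" unfolding K_def using k0 th0 s0 by (simp add: field_simps power_mult_distrib)
    finally show ?thesis using yZ u0_def by simp
  qed
  have ex: "\<exists>y\<ge>Z. poly Q y = poly P s" if s: "s \<ge> S" for s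
  proof -
    define u0 where "u0 = c * s + d"
    have u0: "u0 - 1 \<ge> \<theta> * s" "\<theta> * s \<ge> Z" using Su[OF s] u0_def by auto
    have s0: "s \<ge> 1" using s S1 by auto
    have Gs: "poly Q u0 - poly P s = poly G s" using polyG u0_def by simp
    have "poly Q (u0 + 1) - poly Q u0 \<ge> \<kappa> * u0 ^ (m - 1) * 1" using ME[of u0 "u0 + 1"] u0 by auto
    moreover have "\<kappa> * u0 ^ (m - 1) \<ge> \<kappa> * (\<theta> * s) ^ m'"
    proof -
      have "0 \<le> \<theta> * s" using th0 s0 by simp
      then have "(\<theta> * s) ^ m' \<le> u0 ^ m'" using u0 by (simp add: power_mono)
      then show ?thesis using k0 m' by simp
    qed
    ultimately have h: "poly Q (u0 + 1) \<ge> poly P s" using E0[OF s] Gs by linarith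
    have l: "poly Q Z \<le> poly P s" using QBb[of Z] Z SP[OF s] by auto
    from IVT[of "poly Q" Z "poly P s" "u0 + 1"] h l u0 obtain y where "Z \<le> y" "poly Q y = poly P s"
      by auto
    then show ?thesis by auto
  qed
  have Su2: "\<forall>s\<ge>S. c * s + d - 1 \<ge> Z" using Su by force
  show ?thesis
    by (rule exI[of _ d], rule exI[of _ Z], rule exI[of _ S], rule exI[of _ K])
       (use Z(1) S1 K0 smono main ex SK Su2 in auto)
qed




definition cnt :: "(nat \<Rightarrow> bool) \<Rightarrow> nat \<Rightarrow> nat" where
  "cnt F r = card {n \<in> {1..r}. F n}"

definition dens :: "(nat \<Rightarrow> bool) \<Rightarrow> real \<Rightarrow> bool" where
  "dens F \<rho> \<longleftrightarrow> (\<lambda>r. real (cnt F r) / real r) \<longlonglongrightarrow> \<rho>"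

lemma cnt_le: "cnt F r \<le> r"
proof -
  have "cnt F r \<le> card {1..r}" unfolding cnt_def by (intro card_mono) auto
  then show ?thesis by simp
qed

lemma dens_bounded:
  assumes "\<forall>r. \<bar>real (cnt F r) - \<rho> * real r\<bar> \<le> C"
  shows "dens F \<rho>"
  unfolding dens_def
proof (rule tendsto_sandwich[of "\<lambda>r. \<rho> - C / real r" _ _ "\<lambda>r. \<rho> + C / real r"])
  show "\<forall>\<^sub>F r in sequentially. \<rho> - C / real r \<le> real (cnt F r) / real r"
  proof (rule eventually_sequentiallyI[of 1])
    fix r :: nat assume r: "r \<ge> 1"
    have "real (cnt F r) \<ge> \<rho> * real r - C" using assms[rule_format, of r] by linarith
    then have "(\<rho> * real r - C) / real r \<le> real (cnt F r) / real r" by (simp add: divide_right_mono)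
    moreover have "(\<rho> * real r - C) / real r = \<rho> - C / real r" using r by (simp add: field_simps)
    ultimately show "\<rho> - C / real r \<le> real (cnt F r) / real r" by simp
  qed
  show "\<forall>\<^sub>F r in sequentially. real (cnt F r) / real r \<le> \<rho> + C / real r"
  proof (rule eventually_sequentiallyI[of 1])
    fix r :: nat assume r: "r \<ge> 1"
    have "real (cnt F r) \<le> \<rho> * real r + C" using assms[rule_format, of r] by linarith
    then have "real (cnt F r) / real r \<le> (\<rho> * real r + C) / real r" by (simp add: divide_right_mono)
    moreover have "(\<rho> * real r + C) / real r = \<rho> + C / real r" using r by (simp add: field_simps)
    ultimately show "real (cnt F r) / real r \<le> \<rho> + C / real r" by simp
  qed
  show "(\<lambda>r. \<rho> - C / real r) \<longlonglongrightarrow> \<rho>"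
    using tendsto_diff[OF tendsto_const lim_const_over_n[of C]] by simp
  show "(\<lambda>r. \<rho> + C / real r) \<longlonglongrightarrow> \<rho>"
    using tendsto_add[OF tendsto_const lim_const_over_n[of C]] by simp
qed

lemma dens_transfer:
  assumes "\<forall>r. \<bar>real (cnt F r) - real (cnt G r)\<bar> \<le> C" and "dens G \<rho>"
  shows "dens F \<rho>"
proof -
  have "(\<lambda>r. real (cnt G r) / real r + (real (cnt F r) - real (cnt G r)) / real r) \<longlonglongrightarrow> \<rho> + 0"
  proof (rule tendsto_add)
    show "(\<lambda>r. real (cnt G r) / real r) \<longlonglongrightarrow> \<rho>" using assms(2) unfolding dens_def .
    show "(\<lambda>r. (real (cnt F r) - real (cnt G r)) / real r) \<longlonglongrightarrow> 0"
    proof (rule tendsto_sandwich[of "\<lambda>r. - C / real r" _ _ "\<lambda>r. C / real r"])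
      show "\<forall>\<^sub>F r in sequentially. - C / real r \<le> (real (cnt F r) - real (cnt G r)) / real r"
      proof (intro always_eventually allI)
        fix r
        have "- C \<le> real (cnt F r) - real (cnt G r)" using assms(1)[rule_format, of r] by (auto simp: abs_le_iff)
        then show "- C / real r \<le> (real (cnt F r) - real (cnt G r)) / real r" by (rule divide_right_mono) simp
      qed
      show "\<forall>\<^sub>F r in sequentially. (real (cnt F r) - real (cnt G r)) / real r \<le> C / real r"
        using assms(1) by (intro always_eventually allI) (auto simp: abs_le_iff divide_right_mono)
      show "(\<lambda>r. - C / real r) \<longlonglongrightarrow> 0" using lim_const_over_n[of "-C"] by simp
      show "(\<lambda>r. C / real r) \<longlonglongrightarrow> 0" by (rule lim_const_over_n)
    qed
  qed
  then show ?thesis unfolding dens_def by (simp add: diff_divide_distrib)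
qed

lemma cnt_eventually:
  assumes "\<forall>n\<ge>N. F n = G n"
  shows "\<bar>real (cnt F r) - real (cnt G r)\<bar> \<le> real N"
proof -
  have gen: "real (cnt F r) \<le> real (cnt G r) + real N" if "\<forall>n\<ge>N. F n = G n" for F G
  proof -
    have "{n \<in> {1..r}. F n} \<subseteq> {n \<in> {1..r}. G n} \<union> {..<N}" using that by auto
    then have "cnt F r \<le> card ({n \<in> {1..r}. G n} \<union> {..<N})" unfolding cnt_def by (intro card_mono) auto
    also have "\<dots> \<le> cnt G r + card {..<N}" unfolding cnt_def by (rule card_Un_le)
    finally show ?thesis by simp
  qed
  show ?thesis using gen[OF assms] gen[of G F] assms by (auto simp: abs_le_iff)
qed

lemma dens_eventually:
  assumes "\<forall>n\<ge>N. F n = G n" and "dens G \<rho>" shows "dens F \<rho>"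
  using dens_transfer[OF _ assms(2)] cnt_eventually[OF assms(1)] by blast

lemma dens_zero_sub:
  assumes "\<forall>n. F n \<longrightarrow> G n" and "dens G 0" shows "dens F 0"
  unfolding dens_def
proof (rule tendsto_sandwich[of "\<lambda>r. 0" _ _ "\<lambda>r. real (cnt G r) / real r"])
  show "\<forall>\<^sub>F n in sequentially. 0 \<le> real (cnt F n) / real n" by simp
  show "\<forall>\<^sub>F n in sequentially. real (cnt F n) / real n \<le> real (cnt G n) / real n"
  proof (intro always_eventually allI divide_right_mono)
    fix r
    have "cnt F r \<le> cnt G r" unfolding cnt_def using assms(1) by (intro card_mono) auto
    then show "real (cnt F r) \<le> real (cnt G r)" by simp
  qed simp
  show "(\<lambda>n. 0) \<longlonglongrightarrow> (0::real)" by simp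
  show "(\<lambda>r. real (cnt G r) / real r) \<longlonglongrightarrow> 0" using assms(2) unfolding dens_def .
qed

lemma dens_finite:
  assumes "finite {n. F n}" shows "dens F 0"
proof (rule dens_bounded[of _ _ "real (card {n. F n})"], intro allI)
  fix r
  have "cnt F r \<le> card {n. F n}" unfolding cnt_def using assms by (intro card_mono) auto
  then show "\<bar>real (cnt F r) - 0 * real r\<bar> \<le> real (card {n. F n})" by simp
qed

lemma dens_true:
  assumes "\<forall>n\<ge>1. F n" shows "dens F 1"
proof (rule dens_bounded[of _ _ 0], intro allI)
  fix r
  have "{n \<in> {1..r}. F n} = {1..r}" using assms by auto
  then show "\<bar>real (cnt F r) - 1 * real r\<bar> \<le> 0" unfolding cnt_def by simp
qed

lemma cnt_spacing_bound:
  assumes H: "H \<ge> 1" and sp: "\<forall>a b. N \<le> a \<longrightarrow> a < b \<longrightarrow> b \<le> a + H \<longrightarrow> F a \<longrightarrow> F b \<longrightarrow> False"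
  shows "cnt F r \<le> N + (r div H + 1)"
proof -
  define B where "B = {n \<in> {1..r}. F n \<and> n \<ge> N}"
  have "{n \<in> {1..r}. F n} \<subseteq> {..<N} \<union> B" unfolding B_def by auto
  then have "cnt F r \<le> card ({..<N} \<union> B)" unfolding cnt_def B_def by (intro card_mono) auto
  also have "\<dots> \<le> N + card B" using card_Un_le[of "{..<N}" B] by simp
  also have "card B \<le> r div H + 1"
  proof -
    have inj: "inj_on (\<lambda>n. n div H) B"
    proof (rule inj_onI)
      fix a b assume ab: "a \<in> B" "b \<in> B" "a div H = b div H"
      show "a = b"
      proof (rule ccontr)
        assume "a \<noteq> b"
        then consider "a < b" | "b < a" by linarith
        then show False
        proof cases
          case 1
          then have "b > a + H" using sp ab unfolding B_def by (metis (mono_tags, lifting) mem_Collect_eq not_le)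
          then have "(a + H) div H \<le> b div H" by (intro div_le_mono) simp
          then show False using ab H by simp
        next
          case 2
          then have "a > b + H" using sp ab unfolding B_def by (metis (mono_tags, lifting) mem_Collect_eq not_le)
          then have "(b + H) div H \<le> a div H" by (intro div_le_mono) simp
          then show False using ab H by simp
        qed
      qed
    qed
    have "(\<lambda>n. n div H) ` B \<subseteq> {..r div H}" unfolding B_def by (auto intro: div_le_mono)
    then have "card ((\<lambda>n. n div H) ` B) \<le> card {..r div H}" by (intro card_mono) auto
    then show ?thesis using card_image[OF inj] by simp
  qed
  finally show ?thesis by simp
qed

lemma dens_spacing:
  assumes "\<forall>H\<ge>1. \<exists>N. \<forall>a b. N \<le> a \<longrightarrow> a < b \<longrightarrow> b \<le> a + H \<longrightarrow> F a \<longrightarrow> F b \<longrightarrow> False"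
  shows "dens F 0"
  unfolding dens_def
proof (rule LIMSEQ_I)
  fix \<epsilon> :: real assume e: "\<epsilon> > 0"
  define H where "H = nat \<lceil>2 / \<epsilon>\<rceil> + 1"
  have H1: "H \<ge> 1" unfolding H_def by simp
  have Hb: "1 / real H < \<epsilon> / 2"
  proof -
    have "real H > 2 / \<epsilon>" unfolding H_def by linarith
    then have "2 < \<epsilon> * real H" using e by (simp add: field_simps)
    moreover have "real H > 0" using H1 by simp
    ultimately show ?thesis using e by (simp add: field_simps)
  qed
  obtain N where N: "\<forall>a b. N \<le> a \<longrightarrow> a < b \<longrightarrow> b \<le> a + H \<longrightarrow> F a \<longrightarrow> F b \<longrightarrow> False"
    using assms H1 by blast
  define r0 where "r0 = nat \<lceil>2 * (real N + 1) / \<epsilon>\<rceil> + 1"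
  show "\<exists>no. \<forall>r\<ge>no. norm (real (cnt F r) / real r - 0) < \<epsilon>"
  proof (intro exI allI impI)
    fix r assume r: "r \<ge> r0"
    have rpos: "real r > 0" using r unfolding r0_def by simp
    have rb: "real r > 2 * (real N + 1) / \<epsilon>" using r unfolding r0_def by linarith
    have "cnt F r \<le> N + (r div H + 1)" by (rule cnt_spacing_bound[OF H1 N])
    then have "real (cnt F r) \<le> real N + 1 + real (r div H)" by linarith
    also have "real (r div H) \<le> real r / real H" by (rule of_nat_div_le_of_nat)
    finally have "real (cnt F r) \<le> real N + 1 + real r / real H" by simp
    then have "real (cnt F r) / real r \<le> (real N + 1) / real r + 1 / real H"
      using rpos by (simp add: field_simps)
    also have "(real N + 1) / real r < \<epsilon> / 2" using rb rpos e by (simp add: field_simps)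
    finally have "real (cnt F r) / real r < \<epsilon>" using Hb by simp
    then show "norm (real (cnt F r) / real r - 0) < \<epsilon>" by simp
  qed
qed




lemma periodic_mod:
  assumes "\<forall>n. F (n + L) = F (n::nat)"
  shows "F (n mod L) = F n"
proof -
  have "F (s + j * L) = F s" for s j
  proof (induction j)
    case 0 then show ?case by simp
  next
    case (Suc j)
    have "s + Suc j * L = (s + j * L) + L" by simp
    then show ?case using Suc assms by metis
  qed
  from this[of "n mod L" "n div L"] show ?thesis by simp
qed

lemma dens_periodic:
  assumes L: "L > 0" and per: "\<forall>n. F (n + L) = F (n::nat)"
  shows "dens F (real (card {n. n < L \<and> F n}) / real L)"
proof -
  define \<kappa> where "\<kappa> = cnt F L"
  have step: "cnt F (r + L) = cnt F r + \<kappa>" for r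
  proof -
    have eq: "{n \<in> {1..r + L}. F n} = {n \<in> {1..L}. F n} \<union> (\<lambda>n. n + L) ` {n \<in> {1..r}. F n}"
    proof (intro equalityI subsetI)
      fix n assume n: "n \<in> {n \<in> {1..r + L}. F n}"
      show "n \<in> {n \<in> {1..L}. F n} \<union> (\<lambda>n. n + L) ` {n \<in> {1..r}. F n}"
      proof (cases "n \<le> L")
        case True then show ?thesis using n by auto
      next
        case False
        then have "n = (n - L) + L" "F (n - L)" using n per[rule_format, of "n - L"] by auto
        then show ?thesis using n False by (auto intro!: image_eqI[of _ _ "n - L"])
      qed
    qed (use per in auto)
    have "cnt F (r + L) = card {n \<in> {1..L}. F n} + card ((\<lambda>n. n + L) ` {n \<in> {1..r}. F n})"
      unfolding cnt_def eq by (intro card_Un_disjoint) auto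
    also have "card ((\<lambda>n. n + L) ` {n \<in> {1..r}. F n}) = cnt F r"
      unfolding cnt_def by (intro card_image) (auto simp: inj_on_def)
    finally show ?thesis unfolding \<kappa>_def cnt_def by simp
  qed
  have mul: "cnt F (j * L + s) = j * \<kappa> + cnt F s" for j s
  proof (induction j)
    case 0 then show ?case by simp
  next
    case (Suc j)
    have "Suc j * L + s = (j * L + s) + L" by simp
    then show ?case using Suc step[of "j * L + s"] by (metis add.assoc add.commute mult_Suc)
  qed
  have \<kappa>eq: "\<kappa> = card {n. n < L \<and> F n}"
  proof -
    have "(\<lambda>n. n mod L) ` {n \<in> {1..L}. F n} = {n. n < L \<and> F n}"
    proof (intro equalityI subsetI)
      fix n assume "n \<in> (\<lambda>n. n mod L) ` {n \<in> {1..L}. F n}"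
      then obtain k where k: "k \<in> {1..L}" "F k" "n = k mod L" by auto
      then show "n \<in> {n. n < L \<and> F n}" using L periodic_mod[OF per, of k] by auto
    next
      fix n assume n: "n \<in> {n. n < L \<and> F n}"
      show "n \<in> (\<lambda>n. n mod L) ` {n \<in> {1..L}. F n}"
      proof (cases "n = 0")
        case True
        then have "F L" using n per[rule_format, of 0] by simp
        then show ?thesis using True L by (auto intro!: image_eqI[of _ _ L])
      next
        case False then show ?thesis using n by (auto intro!: image_eqI[of _ _ n])
      qed
    qed
    moreover have "inj_on (\<lambda>n. n mod L) {n \<in> {1..L}. F n}"
    proof (rule inj_onI)
      fix a b assume "a \<in> {n \<in> {1..L}. F n}" "b \<in> {n \<in> {1..L}. F n}" "a mod L = b mod L"
      then show "a = b"
        by (cases "a = L"; cases "b = L") auto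
    qed
    ultimately show ?thesis unfolding \<kappa>_def cnt_def by (metis card_image)
  qed
  have kL: "\<kappa> \<le> L" unfolding \<kappa>_def by (rule cnt_le)
  show ?thesis unfolding \<kappa>eq[symmetric]
  proof (rule dens_bounded[of _ _ "real L"], intro allI)
    fix r
    have r: "r = (r div L) * L + r mod L" by simp
    have c: "cnt F r = (r div L) * \<kappa> + cnt F (r mod L)" by (subst r, rule mul)
    have c2: "cnt F (r mod L) \<le> L" using cnt_le[of F "r mod L"] L by (meson mod_le_divisor order_trans)
    have "real \<kappa> / real L * real r = real (r div L) * real \<kappa> + real \<kappa> * real (r mod L) / real L"
    proof -
      have rr: "real r = real (r div L) * real L + real (r mod L)"
        by (metis of_nat_add of_nat_mult r)
      show ?thesis using L by (subst rr) (simp add: field_simps)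
    qed
    moreover have "real \<kappa> * real (r mod L) / real L \<le> real L"
    proof -
      have "real \<kappa> * real (r mod L) \<le> real L * real L"
        using kL L by (intro mult_mono) auto
      then show ?thesis using L by (simp add: field_simps)
    qed
    moreover have "real \<kappa> * real (r mod L) / real L \<ge> 0" by simp
    moreover have "real (cnt F r) = real (r div L) * real \<kappa> + real (cnt F (r mod L))" using c by simp
    moreover have "real (cnt F (r mod L)) \<le> real L" using c2 by simp
    ultimately show "\<bar>real (cnt F r) - real \<kappa> / real L * real r\<bar> \<le> real L"
      unfolding abs_le_iff by (smt (verit) of_nat_0_le_iff)
  qed
qed

lemma crt2:
  fixes a b m1 m2 :: int
  assumes "gcd m1 m2 dvd (a - b)"
  shows "\<exists>N. m1 dvd (N - a) \<and> m2 dvd (N - b)"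
proof -
  obtain u v where uv: "u * m1 + v * m2 = gcd m1 m2" using bezout_int by blast
  obtain t where t: "a - b = gcd m1 m2 * t" using assms by (auto elim: dvdE)
  show ?thesis
  proof (intro exI conjI)
    show "m1 dvd (a - u * m1 * t - a)" by simp
    have "a - u * m1 * t - b = (u * m1 + v * m2) * t - u * m1 * t" using uv t by simp
    also have "\<dots> = v * m2 * t" by (simp add: algebra_simps)
    finally have "a - u * m1 * t - b = v * m2 * t" .
    then show "m2 dvd (a - u * m1 * t - b)" by simp
  qed
qed

lemma gcd_Lcm_dvd:
  fixes f :: "'a \<Rightarrow> int"
  assumes "finite S" "\<forall>i\<in>S. gcd x (f i) dvd y"
  shows "gcd x (Lcm (f ` S)) dvd y"
  using assms
proof (induction S rule: finite_induct)
  case empty then show ?case by simp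
next
  case (insert a S)
  then show ?case by (simp add: gcd_lcm_distrib)
qed

lemma gcrt:
  fixes \<alpha> w :: "'a \<Rightarrow> int"
  assumes "finite S" "\<forall>i\<in>S. \<forall>j\<in>S. gcd (\<alpha> i) (\<alpha> j) dvd (w i - w j)"
  shows "\<exists>N. \<forall>i\<in>S. \<alpha> i dvd (N - w i)"
  using assms
proof (induction S rule: finite_induct)
  case empty then show ?case by simp
next
  case (insert a S)
  then obtain N0 where N0: "\<forall>i\<in>S. \<alpha> i dvd (N0 - w i)" by auto
  have "gcd (\<alpha> a) (Lcm (\<alpha> ` S)) dvd (N0 - w a)"
  proof (rule gcd_Lcm_dvd[OF insert(1)], intro ballI)
    fix i assume i: "i \<in> S"
    have "gcd (\<alpha> a) (\<alpha> i) dvd (N0 - w i)"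
      using N0 i by (meson dvd_trans gcd_dvd2)
    moreover have "gcd (\<alpha> a) (\<alpha> i) dvd (w i - w a)"
      using insert(4) i by (metis dvd_diff_commute gcd.commute insert_iff)
    ultimately have "gcd (\<alpha> a) (\<alpha> i) dvd ((N0 - w i) + (w i - w a))" by (rule dvd_add)
    then show "gcd (\<alpha> a) (\<alpha> i) dvd (N0 - w a)" by simp
  qed
  then have "gcd (Lcm (\<alpha> ` S)) (\<alpha> a) dvd (N0 - w a)" by (simp add: gcd.commute)
  from crt2[OF this] obtain N where N: "Lcm (\<alpha> ` S) dvd (N - N0)" "\<alpha> a dvd (N - w a)" by blast
  show ?case
  proof (intro exI ballI)
    fix i assume "i \<in> insert a S"
    then consider "i = a" | "i \<in> S" by auto
    then show "\<alpha> i dvd (N - w i)"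
    proof cases
      case 1 then show ?thesis using N by simp
    next
      case 2
      then have "\<alpha> i dvd (N - N0)" using N(1) by (meson dvd_Lcm image_eqI dvd_trans)
      moreover have "\<alpha> i dvd (N0 - w i)" using N0 2 by auto
      ultimately have "\<alpha> i dvd ((N - N0) + (N0 - w i))" by (rule dvd_add)
      then show ?thesis by simp
    qed
  qed
qed




lemma polyvals_iff: "v \<in> polyvals p \<longleftrightarrow> (\<exists>l::nat. l \<ge> 1 \<and> v = poly p (real l))"
  unfolding polyvals_def by auto

lemma distZ:
  fixes x :: real and z :: int
  shows "\<bar>x - real_of_int z\<bar> \<ge> min (frac x) (1 - frac x)"
proof -
  have x: "x = real_of_int \<lfloor>x\<rfloor> + frac x" by (simp add: frac_def)
  show ?thesis
  proof (cases "z \<le> \<lfloor>x\<rfloor>")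
    case True
    then have "real_of_int z \<le> real_of_int \<lfloor>x\<rfloor>" by simp
    then show ?thesis using x frac_ge_0[of x] by linarith
  next
    case False
    then have "real_of_int z \<ge> real_of_int \<lfloor>x\<rfloor> + 1" by linarith
    then show ?thesis using x frac_lt_1[of x] by linarith
  qed
qed

lemma irr_dens0:
  fixes P Q :: "real poly" and m :: nat
  assumes m: "m \<ge> 1" and dP: "degree P = m" and dQ: "degree Q = m"
    and A: "lead_coeff P > 0" and B: "lead_coeff Q > 0"
    and irr: "(lead_coeff P / lead_coeff Q) powr (1 / real m) \<notin> \<rat>"
  shows "dens (\<lambda>n. poly P (real n) \<in> polyvals Q) 0"
proof -
  define c where "c = (lead_coeff P / lead_coeff Q) powr (1 / real m)"
  from close_lemma[OF m dP dQ A B] obtain d Z S K where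
    cl: "Z \<ge> 1" "S \<ge> 1" "K \<ge> 0"
      "\<forall>s\<ge>S. \<forall>y\<ge>1. poly Q y = poly P s \<longrightarrow> y \<ge> Z \<and> \<bar>y - (c * s + d)\<bar> \<le> K / s"
    unfolding c_def by blast
  show ?thesis
  proof (rule dens_spacing, intro allI impI)
    fix H :: nat assume H: "H \<ge> 1"
    define f where "f = (\<lambda>h::nat. min (frac (c * real h)) (1 - frac (c * real h)))"
    define \<epsilon> where "\<epsilon> = Min (f ` {1..H})"
    have fpos: "f h > 0" if "h \<ge> 1" for h
    proof -
      have "c * real h \<notin> \<int>"
      proof
        assume "c * real h \<in> \<int>"
        then obtain z where "c * real h = real_of_int z" by (auto elim: Ints_cases)
        then have "c = real_of_int z / real h" using that by (simp add: field_simps)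
        then have "c \<in> \<rat>" by simp
        then show False using irr c_def by simp
      qed
      then show ?thesis unfolding f_def using frac_lt_1 by auto
    qed
    have e0: "\<epsilon> > 0" unfolding \<epsilon>_def using H fpos by (subst Min_gr_iff) auto
    have ele: "\<epsilon> \<le> f h" if "h \<in> {1..H}" for h unfolding \<epsilon>_def using that by simp
    define N where "N = nat \<lceil>max S (2 * K / \<epsilon> + 1)\<rceil>"
    show "\<exists>N. \<forall>a b. N \<le> a \<longrightarrow> a < b \<longrightarrow> b \<le> a + H \<longrightarrow>
            poly P (real a) \<in> polyvals Q \<longrightarrow> poly P (real b) \<in> polyvals Q \<longrightarrow> False"
    proof (intro exI allI impI)
      fix a b :: nat assume ab: "N \<le> a" "a < b" "b \<le> a + H"
        and Ea: "poly P (real a) \<in> polyvals Q" and Eb: "poly P (real b) \<in> polyvals Q"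
      have aS: "real a \<ge> S" and a2: "real a > 2 * K / \<epsilon>" using ab unfolding N_def by linarith+
      have a1: "real a \<ge> 1" using aS cl by simp
      obtain la where la: "la \<ge> 1" "poly P (real a) = poly Q (real la)" using Ea by (auto simp: polyvals_iff)
      obtain lb where lb: "lb \<ge> 1" "poly P (real b) = poly Q (real lb)" using Eb by (auto simp: polyvals_iff)
      have da: "\<bar>real la - (c * real a + d)\<bar> \<le> K / real a" using cl(4) aS la by simp
      have "\<bar>real lb - (c * real b + d)\<bar> \<le> K / real b" using cl(4) aS lb ab by simp
      also have "K / real b \<le> K / real a" using cl(3) a1 ab by (intro divide_left_mono) auto
      finally have db: "\<bar>real lb - (c * real b + d)\<bar> \<le> K / real a" .
      define h where "h = b - a"
      have h: "h \<in> {1..H}" using ab unfolding h_def by auto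
      have "c * real h - real_of_int (int lb - int la) = (c * real b + d - real lb) - (c * real a + d - real la)"
        unfolding h_def using ab by (simp add: of_nat_diff algebra_simps)
      then have "\<bar>c * real h - real_of_int (int lb - int la)\<bar> \<le> 2 * K / real a" using da db by linarith
      also have "\<dots> < \<epsilon>" using a2 e0 a1 by (simp add: field_simps)
      finally have "\<bar>c * real h - real_of_int (int lb - int la)\<bar> < f h" using ele[OF h] by simp
      then show False using distZ[of "c * real h" "int lb - int la"] unfolding f_def by linarith
    qed
  qed
qed

lemma rat_ident:
  fixes P Q :: "real poly" and m :: nat
  assumes m: "m \<ge> 1" and dP: "degree P = m" and dQ: "degree Q = m"
    and A: "lead_coeff P > 0" and B: "lead_coeff Q > 0"
    and rat: "(lead_coeff P / lead_coeff Q) powr (1 / real m) \<in> \<rat>"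
    and inf: "infinite {n::nat. poly P (real n) \<in> polyvals Q}"
  shows "\<exists>d\<in>\<rat>. \<forall>y. poly Q ((lead_coeff P / lead_coeff Q) powr (1 / real m) * y + d) = poly P y"
proof -
  define c where "c = (lead_coeff P / lead_coeff Q) powr (1 / real m)"
  have c0: "c > 0" unfolding c_def using A B by (auto simp: divide_pos_pos)
  from close_lemma[OF m dP dQ A B] obtain d Z S K where
    cl: "Z \<ge> 1" "S \<ge> 1" "K \<ge> 0"
      "\<forall>s\<ge>S. \<forall>y\<ge>1. poly Q y = poly P s \<longrightarrow> y \<ge> Z \<and> \<bar>y - (c * s + d)\<bar> \<le> K / s"
    unfolding c_def by blast
  obtain u v :: nat where uv: "v \<noteq> 0" "\<bar>c\<bar> = real u / real v"
    using rat unfolding c_def[symmetric] by (elim Rats_abs_nat_div_natE) auto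
  have cuv: "c = real u / real v" using uv c0 by simp
  define N where "N = nat \<lceil>max S (4 * K + 1)\<rceil>"
  define E where "E = {n::nat. poly P (real n) \<in> polyvals Q \<and> n \<ge> N}"
  have infE: "infinite E"
  proof
    assume "finite E"
    then have "finite (E \<union> {..<N})" by simp
    moreover have "{n::nat. poly P (real n) \<in> polyvals Q} \<subseteq> E \<union> {..<N}" unfolding E_def by auto
    ultimately show False using inf finite_subset by blast
  qed
  have "E = (\<Union>\<rho><v. {n \<in> E. n mod v = \<rho>})" using uv by auto
  then obtain \<rho> where "infinite {n \<in> E. n mod v = \<rho>}"
    using infE by (metis (no_types, lifting) finite_UN finite_lessThan)
  then obtain C where C: "infinite C" "C \<subseteq> E" "\<And>n. n \<in> C \<Longrightarrow> n mod v = \<rho>" by blast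
  have wit: "\<exists>l::nat. l \<ge> 1 \<and> poly Q (real l) = poly P (real n) \<and> \<bar>real l - (c * real n + d)\<bar> \<le> K / real n"
    if "n \<in> C" for n
  proof -
    have nE: "n \<in> E" using C that by auto
    then obtain l where l: "l \<ge> 1" "poly P (real n) = poly Q (real l)" unfolding E_def by (auto simp: polyvals_iff)
    have "nat \<lceil>max S (4 * K + 1)\<rceil> \<le> n" using nE unfolding E_def N_def by auto
    then have "real n \<ge> S" by linarith
    then show ?thesis using cl(4) l by (intro exI[of _ l]) auto
  qed
  have Nb: "2 * K / real n < 1" if "n \<in> C" for n
  proof -
    have "real n \<ge> 4 * K + 1" using that C unfolding E_def N_def by auto
    then show ?thesis using cl(3) by (simp add: field_simps)
  qed
  obtain n1 where n1: "n1 \<in> C" using C(1) by (metis finite.emptyI ex_in_conv)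
  obtain l1 where l1: "l1 \<ge> 1" "poly Q (real l1) = poly P (real n1)" "\<bar>real l1 - (c * real n1 + d)\<bar> \<le> K / real n1"
    using wit[OF n1] by blast
  define \<delta>0 where "\<delta>0 = real l1 - (c * real n1 + d)"
  have same: "real l - (c * real n + d) = \<delta>0"
    if n: "n \<in> C" and l: "\<bar>real l - (c * real n + d)\<bar> \<le> K / real n" for n l
  proof -
    have "int v dvd (int n - int n1)"
      using C(3)[OF n] C(3)[OF n1] by (metis mod_eq_dvd_iff of_nat_mod)
    then obtain t where t: "int n - int n1 = int v * t" by (auto elim: dvdE)
    have "c * (real n - real n1) = real u * real_of_int t"
    proof -
      have "real n - real n1 = real v * real_of_int t" using t by (metis of_int_of_nat_eq of_int_diff of_int_mult)
      then show ?thesis unfolding cuv using uv by simp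
    qed
    define z where "z = (int l - int l1) - int u * t"
    have zeq: "real_of_int z = (real l - (c * real n + d)) - \<delta>0"
      unfolding z_def \<delta>0_def using \<open>c * (real n - real n1) = real u * real_of_int t\<close>
      by (simp add: algebra_simps)
    have "\<bar>real_of_int z\<bar> \<le> K / real n + K / real n1" using zeq l l1(3) \<delta>0_def by linarith
    also have "K / real n + K / real n1 < 1"
    proof -
      have "real n \<ge> 4 * K + 1" "real n1 \<ge> 4 * K + 1" using n n1 C unfolding E_def N_def by auto
      then have "K / real n \<le> 1/4" "K / real n1 \<le> 1/4" using cl(3) by (simp_all add: field_simps)
      then show ?thesis by linarith
    qed
    finally have "z = 0" by linarith
    then show ?thesis using zeq by simp
  qed
  have d0: "\<delta>0 = 0"
  proof (rule ccontr)
    assume nz: "\<delta>0 \<noteq> 0"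
    obtain n where n: "n \<in> C" "n > nat \<lceil>K / \<bar>\<delta>0\<bar>\<rceil>" using C(1) by (meson infinite_nat_iff_unbounded)
    obtain l where "l \<ge> 1" "\<bar>real l - (c * real n + d)\<bar> \<le> K / real n" using wit[OF n(1)] by blast
    then have le: "\<bar>\<delta>0\<bar> \<le> K / real n" using same[OF n(1)] by simp
    have gt: "real n > K / \<bar>\<delta>0\<bar>" using n by linarith
    then have "K < real n * \<bar>\<delta>0\<bar>" using nz by (simp add: pos_divide_less_eq)
    moreover have "real n > 0" using gt cl(3) nz
      by (meson divide_nonneg_pos le_less_trans zero_less_abs_iff)
    ultimately have "K / real n < \<bar>\<delta>0\<bar>" by (simp add: divide_less_eq mult.commute)
    then show False using le by simp
  qed
  have roots: "poly Q (c * real n + d) = poly P (real n)" if nC: "n \<in> C" for n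
  proof -
    obtain l where l: "l \<ge> 1" "poly Q (real l) = poly P (real n)" "\<bar>real l - (c * real n + d)\<bar> \<le> K / real n"
      using wit[OF nC] by blast
    have "real l = c * real n + d" using same[OF nC l(3)] d0 by simp
    then show ?thesis using l by simp
  qed
  define G where "G = pcompose Q [:d, c:] - P"
  have polyG: "poly G y = poly Q (c * y + d) - poly P y" for y
    unfolding G_def by (simp add: poly_pcompose algebra_simps)
  have "G = 0"
  proof (rule ccontr)
    assume "G \<noteq> 0"
    then have "finite {x. poly G x = 0}" by (rule poly_roots_finite)
    moreover have "real ` C \<subseteq> {x. poly G x = 0}" using roots polyG by auto
    ultimately have "finite (real ` C)" by (rule finite_subset[rotated])
    then have "finite C" by (rule finite_imageD) (auto simp: inj_on_def)
    then show False using C(1) by simp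
  qed
  then have ident: "\<forall>y. poly Q (c * y + d) = poly P y" using polyG by (metis diff_eq_eq poly_0 add_0)
  have "d = real l1 - c * real n1" using d0 \<delta>0_def by simp
  moreover have "c \<in> \<rat>" using cuv by simp
  ultimately have "d \<in> \<rat>" by simp
  then show ?thesis using ident unfolding c_def by blast
qed

lemma ident_char:
  fixes P Q :: "real poly" and m :: nat and \<alpha> \<beta> :: nat and x :: real
  assumes m: "m \<ge> 1" and dP: "degree P = m" and dQ: "degree Q = m"
    and A: "lead_coeff P > 0" and B: "lead_coeff Q > 0"
    and ab: "\<alpha> > 0" "\<beta> > 0"
    and cb: "(lead_coeff P / lead_coeff Q) powr (1 / real m) = real \<beta> / real \<alpha>"
    and idt: "\<forall>y. poly Q y = poly P (real \<alpha> / real \<beta> * (y - x))"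
  shows "\<exists>N. \<forall>n\<ge>N. (poly P (real n) \<in> polyvals Q \<longleftrightarrow>
                     (\<exists>z::int. real n = real \<alpha> / real \<beta> * (real_of_int z - x)))"
proof -
  define c where "c = (lead_coeff P / lead_coeff Q) powr (1 / real m)"
  have c: "c = real \<beta> / real \<alpha>" using cb c_def by simp
  have c0: "c > 0" using c ab by simp
  from close_lemma[OF m dP dQ A B] obtain d Z S K where
    cl: "Z \<ge> 1" "S \<ge> 1" "K \<ge> 0" "strict_mono_on {Z..} (poly Q)"
      "\<forall>s\<ge>S. \<forall>y\<ge>1. poly Q y = poly P s \<longrightarrow> y \<ge> Z \<and> \<bar>y - (c * s + d)\<bar> \<le> K / s"
    unfolding c_def by blast
  have id2: "poly Q (c * y + x) = poly P y" for y
  proof -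
    have "real \<alpha> / real \<beta> * (c * y + x - x) = y" unfolding c using ab by simp
    then show ?thesis using idt[rule_format, of "c * y + x"] by simp
  qed
  define N where "N = nat \<lceil>max S ((1 - x) / c)\<rceil>"
  show ?thesis
  proof (intro exI allI impI)
    fix n :: nat assume nN: "N \<le> n"
    have nS: "real n \<ge> S" and nx: "real n \<ge> (1 - x) / c" using nN unfolding N_def by linarith+
    have y01: "c * real n + x \<ge> 1" using nx c0 by (simp add: field_simps)
    have conv: "real n = real \<alpha> / real \<beta> * (y - x) \<longleftrightarrow> y = c * real n + x" for y
      unfolding c using ab by (auto simp: field_simps)
    show "poly P (real n) \<in> polyvals Q \<longleftrightarrow> (\<exists>z::int. real n = real \<alpha> / real \<beta> * (real_of_int z - x))"
    proof
      assume "poly P (real n) \<in> polyvals Q"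
      then obtain l where l: "l \<ge> 1" "poly P (real n) = poly Q (real l)" by (auto simp: polyvals_iff)
      have lZ: "real l \<ge> Z" using cl(5) nS l by auto
      have yZ: "c * real n + x \<ge> Z" using cl(5) nS y01 id2 by auto
      have "real l = c * real n + x"
        using strict_mono_on_eqD[OF cl(4)] l id2[of "real n"] lZ yZ by auto
      then have "real n = real \<alpha> / real \<beta> * (real l - x)" using conv[of "real l"] by blast
      then show "\<exists>z::int. real n = real \<alpha> / real \<beta> * (real_of_int z - x)"
        by (intro exI[of _ "int l"]) simp
    next
      assume "\<exists>z::int. real n = real \<alpha> / real \<beta> * (real_of_int z - x)"
      then obtain z :: int where "real n = real \<alpha> / real \<beta> * (real_of_int z - x)" by blast
      then have z: "real_of_int z = c * real n + x" using conv[of "real_of_int z"] by blast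
      then have z1: "z \<ge> 1" using y01 by linarith
      have "poly P (real n) = poly Q (real (nat z))" using z z1 id2 by simp
      then show "poly P (real n) \<in> polyvals Q" unfolding polyvals_iff using z1
        by (intro exI[of _ "nat z"]) auto
    qed
  qed
qed




definition Pz :: "nat \<Rightarrow> nat \<Rightarrow> real \<Rightarrow> nat \<Rightarrow> bool" where
  "Pz a b x n \<longleftrightarrow> (\<exists>z::int. real n = real a / real b * (real_of_int z - x))"

lemma Pz_shift:
  assumes "b > 0"
  shows "Pz a b x (n + a * k) \<longleftrightarrow> Pz a b x n"
proof
  assume "Pz a b x (n + a * k)"
  then obtain z where z: "real (n + a * k) = real a / real b * (real_of_int z - x)" unfolding Pz_def by blast
  have "real n = real a / real b * (real_of_int (z - int b * int k) - x)"
    using z assms by (simp add: field_simps)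
  then show "Pz a b x n" unfolding Pz_def by blast
next
  assume "Pz a b x n"
  then obtain z where z: "real n = real a / real b * (real_of_int z - x)" unfolding Pz_def by blast
  have "real (n + a * k) = real a / real b * (real_of_int (z + int b * int k) - x)"
    using z assms by (simp add: field_simps)
  then show "Pz a b x (n + a * k)" unfolding Pz_def by blast
qed

lemma Pz_mod:
  assumes "b > 0"
  shows "Pz a b x (n mod a) \<longleftrightarrow> Pz a b x n"
  using Pz_shift[OF assms, of a x "n mod a" "n div a"] by simp

lemma case1_count:
  fixes S :: "nat set" and \<alpha> \<beta> :: "nat \<Rightarrow> nat" and x :: "nat \<Rightarrow> real"
  assumes S: "finite S" and ab: "\<forall>i\<in>S. \<alpha> i > 0 \<and> \<beta> i > 0"
  defines "L \<equiv> Lcm (\<alpha> ` S)"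
  shows "card {n. n < L \<and> (\<forall>i\<in>S. Pz (\<alpha> i) (\<beta> i) (x i) n)} =
         card {w \<in> PiE S (\<lambda>i. Wset (\<alpha> i) (\<beta> i) (x i)). \<forall>i\<in>S. \<forall>j\<in>S. w i - w j \<in> diffset (\<alpha> j) (\<alpha> i)}"
proof -
  define A where "A = {n. n < L \<and> (\<forall>i\<in>S. Pz (\<alpha> i) (\<beta> i) (x i) n)}"
  define Tg where "Tg = {w \<in> PiE S (\<lambda>i. Wset (\<alpha> i) (\<beta> i) (x i)). \<forall>i\<in>S. \<forall>j\<in>S. w i - w j \<in> diffset (\<alpha> j) (\<alpha> i)}"
  define \<phi> where "\<phi> = (\<lambda>n::nat. restrict (\<lambda>i. int (n mod \<alpha> i)) S)"
  have L0: "L > 0" unfolding L_def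
  proof -
    have "Lcm (\<alpha> ` S) \<noteq> 0" using S ab by (subst Lcm_0_iff) auto
    then show "0 < Lcm (\<alpha> ` S)" by simp
  qed
  have dvdL: "\<alpha> i dvd L" if "i \<in> S" for i unfolding L_def using that by auto
  have intL: "int L = Lcm ((\<lambda>i. int (\<alpha> i)) ` S)"
    unfolding L_def by (metis Lcm_int_eq image_image)
  have inj: "inj_on \<phi> A"
  proof (rule inj_onI)
    fix a b assume a: "a \<in> A" and b: "b \<in> A" and eq: "\<phi> a = \<phi> b"
    have "int (\<alpha> i) dvd (int a - int b)" if i: "i \<in> S" for i
    proof -
      have "a mod \<alpha> i = b mod \<alpha> i" using fun_cong[OF eq, of i] i unfolding \<phi>_def by simp
      then have "int a mod int (\<alpha> i) = int b mod int (\<alpha> i)" by (metis of_nat_mod)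
      then show ?thesis by (simp add: mod_eq_dvd_iff)
    qed
    then have "Lcm ((\<lambda>i. int (\<alpha> i)) ` S) dvd (int a - int b)" by (auto intro: Lcm_least)
    then have d: "int L dvd (int a - int b)" using intL by simp
    show "a = b"
    proof (rule ccontr)
      assume "a \<noteq> b"
      then have "\<bar>int L\<bar> \<le> \<bar>int a - int b\<bar>" using d by (intro dvd_imp_le_int) auto
      moreover have "\<bar>int a - int b\<bar> < int L" using a b unfolding A_def by auto
      ultimately show False by simp
    qed
  qed
  have img: "\<phi> ` A = Tg"
  proof (intro equalityI subsetI)
    fix w assume "w \<in> \<phi> ` A"
    then obtain n where n: "n \<in> A" "w = \<phi> n" by auto
    have "w \<in> PiE S (\<lambda>i. Wset (\<alpha> i) (\<beta> i) (x i))"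
      unfolding n(2) \<phi>_def restrict_PiE_iff
    proof (intro ballI)
      fix i assume i: "i \<in> S"
      have "Pz (\<alpha> i) (\<beta> i) (x i) (n mod \<alpha> i)" using n(1) i ab Pz_mod unfolding A_def by blast
      then show "int (n mod \<alpha> i) \<in> Wset (\<alpha> i) (\<beta> i) (x i)"
        unfolding Pz_def Wset_def using i ab by auto
    qed
    moreover have "\<forall>i\<in>S. \<forall>j\<in>S. w i - w j \<in> diffset (\<alpha> j) (\<alpha> i)"
    proof (intro ballI)
      fix i j assume i: "i \<in> S" and j: "j \<in> S"
      have ai: "\<alpha> i \<ge> 1" and aj: "\<alpha> j \<ge> 1" using ab i j by auto
      define s where "s = n div \<alpha> j + \<alpha> i"
      define t where "t = n div \<alpha> i + \<alpha> j"
      have "int (n mod \<alpha> i) - int (n mod \<alpha> j) = int (\<alpha> j) * int s - int (\<alpha> i) * int t"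
      proof -
        have e1: "int n = int (\<alpha> i) * int (n div \<alpha> i) + int (n mod \<alpha> i)"
          by (metis div_mult_mod_eq of_nat_add of_nat_mult mult.commute)
        have e2: "int n = int (\<alpha> j) * int (n div \<alpha> j) + int (n mod \<alpha> j)"
          by (metis div_mult_mod_eq of_nat_add of_nat_mult mult.commute)
        show ?thesis unfolding s_def t_def using e1 e2 by (simp add: algebra_simps)
      qed
      moreover have "s \<ge> 1" "t \<ge> 1" unfolding s_def t_def using ai aj by auto
      ultimately show "w i - w j \<in> diffset (\<alpha> j) (\<alpha> i)"
        unfolding diffset_def n(2) \<phi>_def using i j by auto
    qed
    ultimately show "w \<in> Tg" unfolding Tg_def by simp
  next
    fix w assume w: "w \<in> Tg"
    then have wP: "w \<in> PiE S (\<lambda>i. Wset (\<alpha> i) (\<beta> i) (x i))"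
      and wc: "\<forall>i\<in>S. \<forall>j\<in>S. w i - w j \<in> diffset (\<alpha> j) (\<alpha> i)" unfolding Tg_def by auto
    have g: "\<forall>i\<in>S. \<forall>j\<in>S. gcd (int (\<alpha> i)) (int (\<alpha> j)) dvd (w i - w j)"
    proof (intro ballI)
      fix i j assume "i \<in> S" "j \<in> S"
      then obtain s t :: nat where "w i - w j = int (\<alpha> j) * int s - int (\<alpha> i) * int t"
        using wc unfolding diffset_def by blast
      then show "gcd (int (\<alpha> i)) (int (\<alpha> j)) dvd (w i - w j)" by simp
    qed
    from gcrt[OF S g] obtain N0 where N0: "\<forall>i\<in>S. int (\<alpha> i) dvd (N0 - w i)" by blast
    define n where "n = nat (N0 mod int L)"
    have n0: "int n = N0 mod int L" unfolding n_def using L0 by simp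
    have nL: "n < L" using L0 n0 by (metis of_nat_0_less_iff of_nat_less_iff pos_mod_bound)
    have wmod: "int (n mod \<alpha> i) = w i" if i: "i \<in> S" for i
    proof -
      have wi: "w i \<in> Wset (\<alpha> i) (\<beta> i) (x i)" using wP i by (auto simp: PiE_iff)
      then have w0: "0 \<le> w i" "w i < int (\<alpha> i)" unfolding Wset_def by auto
      have "int (\<alpha> i) dvd int L" using dvdL[OF i] by simp
      then have "int (\<alpha> i) dvd (int n - N0)" unfolding n0
        by (metis dvd_minus_iff minus_diff_eq mod_mod_cancel mod_eq_dvd_iff mod_mod_trivial)
      moreover have "int (\<alpha> i) dvd (N0 - w i)" using N0 i by blast
      ultimately have "int (\<alpha> i) dvd ((int n - N0) + (N0 - w i))" by (rule dvd_add)
      then have "int (\<alpha> i) dvd (int n - w i)" by simp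
      then have "int n mod int (\<alpha> i) = w i mod int (\<alpha> i)" by (simp add: mod_eq_dvd_iff)
      also have "\<dots> = w i" using w0 by simp
      finally show ?thesis by (metis of_nat_mod)
    qed
    have "\<phi> n = w"
    proof
      fix i show "\<phi> n i = w i"
      proof (cases "i \<in> S")
        case True then show ?thesis unfolding \<phi>_def using wmod by simp
      next
        case False then show ?thesis unfolding \<phi>_def using wP by (auto simp: PiE_iff extensional_def)
      qed
    qed
    moreover have "n \<in> A"
    proof -
      have "Pz (\<alpha> i) (\<beta> i) (x i) n" if i: "i \<in> S" for i
      proof -
        have wi: "w i \<in> Wset (\<alpha> i) (\<beta> i) (x i)" using wP i by (auto simp: PiE_iff)
        then obtain z :: int where "real_of_int (w i) = real (\<alpha> i) / real (\<beta> i) * (real_of_int z - x i)"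
          unfolding Wset_def by auto
        then have "real (n mod \<alpha> i) = real (\<alpha> i) / real (\<beta> i) * (real_of_int z - x i)"
          using wmod[OF i] by (metis of_int_of_nat_eq)
        then have "Pz (\<alpha> i) (\<beta> i) (x i) (n mod \<alpha> i)" unfolding Pz_def by blast
        then show ?thesis using Pz_mod ab i by blast
      qed
      then show ?thesis unfolding A_def using nL by auto
    qed
    ultimately show "w \<in> \<phi> ` A" by blast
  qed
  have "card A = card Tg" using bij_betw_same_card[OF bij_betw_imageI[OF inj img]] .
  then show ?thesis unfolding A_def Tg_def .
qed

lemma case1_dens:
  fixes S :: "nat set" and \<alpha> \<beta> :: "nat \<Rightarrow> nat" and x :: "nat \<Rightarrow> real" and F :: "nat \<Rightarrow> bool"
  assumes S: "finite S" and ab: "\<forall>i\<in>S. \<alpha> i > 0 \<and> \<beta> i > 0"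
    and ev: "\<forall>n\<ge>N. F n \<longleftrightarrow> (\<forall>i\<in>S. Pz (\<alpha> i) (\<beta> i) (x i) n)"
  shows "dens F (real (card {w \<in> PiE S (\<lambda>i. Wset (\<alpha> i) (\<beta> i) (x i)). \<forall>i\<in>S. \<forall>j\<in>S. w i - w j \<in> diffset (\<alpha> j) (\<alpha> i)})
                 / real (Lcm (\<alpha> ` S)))"
    and "card {w \<in> PiE S (\<lambda>i. Wset (\<alpha> i) (\<beta> i) (x i)). \<forall>i\<in>S. \<forall>j\<in>S. w i - w j \<in> diffset (\<alpha> j) (\<alpha> i)}
          \<le> Lcm (\<alpha> ` S)"
    and "Lcm (\<alpha> ` S) > 0"
proof -
  define L where "L = Lcm (\<alpha> ` S)"
  have L0: "L > 0" unfolding L_def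
  proof -
    have "Lcm (\<alpha> ` S) \<noteq> 0" using S ab by (subst Lcm_0_iff) auto
    then show "0 < Lcm (\<alpha> ` S)" by simp
  qed
  then show "Lcm (\<alpha> ` S) > 0" unfolding L_def .
  define Per where "Per = (\<lambda>n. \<forall>i\<in>S. Pz (\<alpha> i) (\<beta> i) (x i) n)"
  have per: "\<forall>n. Per (n + L) = Per n"
  proof (intro allI)
    fix n
    have "Pz (\<alpha> i) (\<beta> i) (x i) (n + L) = Pz (\<alpha> i) (\<beta> i) (x i) n" if i: "i \<in> S" for i
    proof -
      have "\<alpha> i dvd L" unfolding L_def using i by auto
      then obtain k where "L = \<alpha> i * k" by (auto elim: dvdE)
      then show ?thesis using Pz_shift ab i by auto
    qed
    then show "Per (n + L) = Per n" unfolding Per_def by auto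
  qed
  have cnteq: "card {n. n < L \<and> Per n} =
     card {w \<in> PiE S (\<lambda>i. Wset (\<alpha> i) (\<beta> i) (x i)). \<forall>i\<in>S. \<forall>j\<in>S. w i - w j \<in> diffset (\<alpha> j) (\<alpha> i)}"
    unfolding Per_def L_def by (rule case1_count[OF S ab])
  have "dens Per (real (card {n. n < L \<and> Per n}) / real L)" by (rule dens_periodic[OF L0 per])
  then show "dens F (real (card {w \<in> PiE S (\<lambda>i. Wset (\<alpha> i) (\<beta> i) (x i)). \<forall>i\<in>S. \<forall>j\<in>S. w i - w j \<in> diffset (\<alpha> j) (\<alpha> i)})
                 / real (Lcm (\<alpha> ` S)))"
    using dens_eventually[of N F Per] ev cnteq unfolding Per_def L_def by auto
  have "card {n. n < L \<and> Per n} \<le> card {..<L}" by (intro card_mono) auto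
  then show "card {w \<in> PiE S (\<lambda>i. Wset (\<alpha> i) (\<beta> i) (x i)). \<forall>i\<in>S. \<forall>j\<in>S. w i - w j \<in> diffset (\<alpha> j) (\<alpha> i)}
          \<le> Lcm (\<alpha> ` S)" using cnteq unfolding L_def by simp
qed




lemma bounded_diff_lim:
  fixes a b :: "nat \<Rightarrow> real"
  assumes ev: "eventually (\<lambda>r. \<bar>a r - b r\<bar> \<le> B) sequentially"
    and lim: "(\<lambda>r. b r / real r) \<longlonglongrightarrow> l"
  shows "(\<lambda>r. a r / real r) \<longlonglongrightarrow> l"
proof -
  have "(\<lambda>r. b r / real r + (a r - b r) / real r) \<longlonglongrightarrow> l + 0"
  proof (rule tendsto_add[OF lim])
    show "(\<lambda>r. (a r - b r) / real r) \<longlonglongrightarrow> 0"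
    proof (rule tendsto_sandwich[of "\<lambda>r. - B / real r" _ _ "\<lambda>r. B / real r"])
      show "\<forall>\<^sub>F r in sequentially. - B / real r \<le> (a r - b r) / real r"
        using ev
      proof eventually_elim
        case (elim r)
        then have "- B \<le> a r - b r" by (simp add: abs_le_iff)
        then show ?case by (rule divide_right_mono) simp
      qed
      show "\<forall>\<^sub>F r in sequentially. (a r - b r) / real r \<le> B / real r"
        using ev by eventually_elim (auto intro: divide_right_mono simp: abs_le_iff)
      show "(\<lambda>r. - B / real r) \<longlonglongrightarrow> 0" using lim_const_over_n[of "-B"] by simp
      show "(\<lambda>r. B / real r) \<longlonglongrightarrow> 0" by (rule lim_const_over_n)
    qed
  qed
  then show ?thesis by (simp add: diff_divide_distrib)
qed

lemma transfer:
  fixes P1 p :: "real poly" and m :: nat and R :: real and D :: "nat \<Rightarrow> bool" and \<rho> :: real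
  assumes m: "m \<ge> 1" and dP: "degree P1 = m" and dQ: "degree p = m"
    and A: "lead_coeff P1 > 0" and B: "lead_coeff p > 0"
    and mono: "strict_mono_on {R..} (poly P1)" and dD: "dens D \<rho>"
  shows "(\<lambda>r. real (card ({x. R \<le> x \<and> (\<exists>n::nat. n \<ge> 1 \<and> D n \<and> poly P1 x = poly p (real n))} \<inter> {1..real r}))
            / real r) \<longlonglongrightarrow> (lead_coeff P1 / lead_coeff p) powr (1 / real m) * \<rho>"
proof -
  define X where "X = {x. R \<le> x \<and> (\<exists>n::nat. n \<ge> 1 \<and> D n \<and> poly P1 x = poly p (real n))}"
  define c where "c = (lead_coeff P1 / lead_coeff p) powr (1 / real m)"
  have c0: "c > 0" unfolding c_def using A B by (auto simp: divide_pos_pos)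
  from close_lemma[OF m dP dQ A B] obtain d Z S K where
    cl: "Z \<ge> 1" "S \<ge> 1" "K \<ge> 0" "strict_mono_on {Z..} (poly p)"
      "\<forall>s\<ge>S. \<forall>y\<ge>1. poly p y = poly P1 s \<longrightarrow> y \<ge> Z \<and> \<bar>y - (c * s + d)\<bar> \<le> K / s"
      "\<forall>s\<ge>S. \<exists>y\<ge>Z. poly p y = poly P1 s" "\<forall>s\<ge>S. K / s \<le> 1/2"
    unfolding c_def by blast
  define ys where "ys = (\<lambda>s. SOME y. y \<ge> Z \<and> poly p y = poly P1 s)"
  have ys: "ys s \<ge> Z" "poly p (ys s) = poly P1 s" "\<bar>ys s - (c * s + d)\<bar> \<le> 1/2" if s: "s \<ge> S" for s
  proof -
    have "\<exists>y. y \<ge> Z \<and> poly p y = poly P1 s" using cl(6) s by blast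
    then have h: "ys s \<ge> Z \<and> poly p (ys s) = poly P1 s" unfolding ys_def by (rule someI_ex)
    then show "ys s \<ge> Z" "poly p (ys s) = poly P1 s" by auto
    have "\<bar>ys s - (c * s + d)\<bar> \<le> K / s" using cl(5) s h cl(1) by auto
    moreover have "K / s \<le> 1/2" using cl(7) s by blast
    ultimately show "\<bar>ys s - (c * s + d)\<bar> \<le> 1/2" by linarith
  qed
  define Y where "Y = (\<lambda>r::nat. nat \<lfloor>ys (real r)\<rfloor>)"
  define R' where "R' = max R 1"
  define N1 where "N1 = nat \<lceil>Z\<rceil>"
  have N1Z: "real n \<ge> Z" if "n \<ge> N1" for n using that unfolding N1_def by linarith
  obtain Z3 where Z3: "Z3 \<ge> 1" "\<forall>z\<ge>Z3. poly p z \<ge> lead_coeff p / 2 * z ^ degree p"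
    using poly_lower_bound[of p] B by auto
  define N3 where "N3 = nat \<lceil>max Z3 (2 * \<bar>poly P1 R'\<bar> / lead_coeff p + 1)\<rceil> + N1"
  have N3p: "poly p (real n) \<ge> poly P1 R'" if "n \<ge> N3" for n
  proof -
    have n: "real n \<ge> Z3" "real n \<ge> 2 * \<bar>poly P1 R'\<bar> / lead_coeff p + 1" using that unfolding N3_def by linarith+
    have "real n ^ m \<ge> real n" using n Z3 m by (metis power_one_right power_increasing order_trans)
    then have "lead_coeff p / 2 * real n ^ m \<ge> lead_coeff p / 2 * real n" using B by simp
    moreover have "lead_coeff p / 2 * real n \<ge> \<bar>poly P1 R'\<bar>"
    proof -
      have "real n \<ge> 2 * \<bar>poly P1 R'\<bar> / lead_coeff p" using n by linarith
      then have "real n * lead_coeff p \<ge> 2 * \<bar>poly P1 R'\<bar>" using B by (simp add: pos_divide_le_eq)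
      then show ?thesis by (simp add: field_simps)
    qed
    ultimately show ?thesis using Z3 n dQ by force
  qed
  have N31: "N1 \<le> N3" unfolding N3_def by simp
  have injP1: "inj_on (poly P1) {R..}" using strict_mono_on_imp_inj_on[OF mono] .
  have key: "\<bar>real (card (X \<inter> {1..real r})) - real (cnt D (Y r))\<bar> \<le> real (N1 + N3)"
    if r: "real r \<ge> max S R'" for r
  proof -
    have rS: "real r \<ge> S" and rR: "real r \<ge> R'" using r by auto
    have yZ: "ys (real r) \<ge> Z" and yeq: "poly p (ys (real r)) = poly P1 (real r)" using ys rS by auto
    have nY: "n \<le> Y r \<longleftrightarrow> poly p (real n) \<le> poly P1 (real r)" if n: "n \<ge> N1" for n
    proof -
      have "poly p (real n) \<le> poly p (ys (real r)) \<longleftrightarrow> real n \<le> ys (real r)"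
        using strict_mono_on_less_eq[OF cl(4)] N1Z[OF n] yZ by auto
      moreover have "real n \<le> ys (real r) \<longleftrightarrow> n \<le> Y r"
      proof -
        have f0: "\<lfloor>ys (real r)\<rfloor> \<ge> 0" using yZ cl(1) by simp
        have "n \<le> Y r \<longleftrightarrow> int n \<le> \<lfloor>ys (real r)\<rfloor>" unfolding Y_def using f0 by (simp add: le_nat_iff)
        also have "\<dots> \<longleftrightarrow> real n \<le> ys (real r)" by (simp add: le_floor_iff)
        finally show ?thesis by simp
      qed
      ultimately show ?thesis using yeq by simp
    qed
    define Xr where "Xr = X \<inter> {1..real r}"
    define Xs where "Xs = {x \<in> Xr. \<exists>n<N1. poly P1 x = poly p (real n)}"
    define Xb where "Xb = {x \<in> Xr. \<exists>n\<ge>N1. D n \<and> n \<ge> 1 \<and> poly P1 x = poly p (real n)}"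
    have XrR: "Xr \<subseteq> {R..}" unfolding Xr_def X_def by auto
    have Xsplit: "Xr \<subseteq> Xs \<union> Xb"
    proof
      fix x assume x: "x \<in> Xr"
      then obtain n where n: "n \<ge> 1" "D n" "poly P1 x = poly p (real n)" unfolding Xr_def X_def by auto
      show "x \<in> Xs \<union> Xb"
      proof (cases "n < N1")
        case True then show ?thesis using x n unfolding Xs_def by auto
      next
        case False then show ?thesis using x n unfolding Xb_def by (auto simp: not_less)
      qed
    qed
    have Xs_img: "poly P1 ` Xs \<subseteq> (\<lambda>n. poly p (real n)) ` {..<N1}" unfolding Xs_def by auto
    have Xs_inj: "inj_on (poly P1) Xs" using injP1 XrR unfolding Xs_def by (auto intro: inj_on_subset)
    have Xs_fin: "finite Xs"
      using Xs_img Xs_inj by (meson finite_imageD finite_imageI finite_lessThan finite_subset)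
    have Xs_card: "card Xs \<le> N1"
    proof -
      have "card Xs = card (poly P1 ` Xs)" using card_image[OF Xs_inj] by simp
      also have "\<dots> \<le> card ((\<lambda>n. poly p (real n)) ` {..<N1})" using Xs_img by (intro card_mono) auto
      also have "\<dots> \<le> card {..<N1}" by (rule card_image_le) simp
      finally show ?thesis by simp
    qed
    define DY where "DY = {n \<in> {1..Y r}. D n}"
    have Xb_img: "poly P1 ` Xb \<subseteq> (\<lambda>n. poly p (real n)) ` DY"
    proof
      fix v assume "v \<in> poly P1 ` Xb"
      then obtain x n where x: "x \<in> Xr" "n \<ge> N1" "D n" "n \<ge> 1" "poly P1 x = poly p (real n)" "v = poly P1 x"
        unfolding Xb_def by auto
      have "R \<le> x" "x \<le> real r" using x(1) unfolding Xr_def X_def by auto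
      then have "poly P1 x \<le> poly P1 (real r)"
        using strict_mono_on_leD[OF mono, of x "real r"] by auto
      then have "n \<le> Y r" using nY[OF x(2)] x(5) by simp
      then show "v \<in> (\<lambda>n. poly p (real n)) ` DY" unfolding DY_def using x by auto
    qed
    have Xb_inj: "inj_on (poly P1) Xb" using injP1 XrR unfolding Xb_def by (auto intro: inj_on_subset)
    have Xb_fin: "finite Xb"
    proof -
      have "finite DY" unfolding DY_def by simp
      then have "finite ((\<lambda>n. poly p (real n)) ` DY)" by simp
      then have "finite (poly P1 ` Xb)" using Xb_img finite_subset by blast
      then show ?thesis using Xb_inj by (rule finite_imageD)
    qed
    have Xb_card: "card Xb \<le> cnt D (Y r)"
    proof -
      have "card Xb = card (poly P1 ` Xb)" using card_image[OF Xb_inj] by simp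
      also have "\<dots> \<le> card ((\<lambda>n. poly p (real n)) ` DY)" using Xb_img unfolding DY_def by (intro card_mono) auto
      also have "\<dots> \<le> card DY" by (rule card_image_le) (simp add: DY_def)
      finally show ?thesis unfolding DY_def cnt_def by simp
    qed
    have Xr_fin: "finite Xr" using Xsplit Xs_fin Xb_fin by (meson finite_UnI finite_subset)
    have up: "card Xr \<le> N1 + cnt D (Y r)"
    proof -
      have "card Xr \<le> card (Xs \<union> Xb)" using Xsplit Xs_fin Xb_fin by (intro card_mono) auto
      also have "\<dots> \<le> card Xs + card Xb" by (rule card_Un_le)
      finally show ?thesis using Xs_card Xb_card by simp
    qed
    define Bn where "Bn = {n \<in> DY. n \<ge> N3}"
    have Bn_img: "(\<lambda>n. poly p (real n)) ` Bn \<subseteq> poly P1 ` Xr"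
    proof
      fix v assume "v \<in> (\<lambda>n. poly p (real n)) ` Bn"
      then obtain n where n: "n \<in> DY" "n \<ge> N3" "v = poly p (real n)" unfolding Bn_def by auto
      have nN1: "n \<ge> N1" using n N31 by simp
      have lo: "poly P1 R' \<le> poly p (real n)" using N3p n by simp
      have hi: "poly p (real n) \<le> poly P1 (real r)" using nY[OF nN1] n unfolding DY_def by simp
      obtain x where x: "R' \<le> x" "x \<le> real r" "poly P1 x = poly p (real n)"
        using IVT[of "poly P1" R' "poly p (real n)" "real r"] lo hi rR by auto
      have "x \<in> Xr" unfolding Xr_def X_def R'_def using x n unfolding DY_def R'_def by auto
      then show "v \<in> poly P1 ` Xr" using x n by (metis image_eqI)
    qed
    have Bn_inj: "inj_on (\<lambda>n. poly p (real n)) Bn"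
    proof (rule inj_onI)
      fix a b assume ab: "a \<in> Bn" "b \<in> Bn" "poly p (real a) = poly p (real b)"
      have "real a \<ge> Z" "real b \<ge> Z" using ab N1Z N31 unfolding Bn_def by auto
      then have "real a = real b" using strict_mono_on_eqD[OF cl(4)] ab(3) by (metis atLeast_iff)
      then show "a = b" by simp
    qed
    have low: "cnt D (Y r) \<le> N3 + card Xr"
    proof -
      have "DY \<subseteq> {..<N3} \<union> Bn" unfolding Bn_def by auto
      moreover have "finite Bn" unfolding Bn_def DY_def by simp
      ultimately have "card DY \<le> card ({..<N3} \<union> Bn)" by (intro card_mono) auto
      also have "\<dots> \<le> N3 + card Bn" using card_Un_le[of "{..<N3}" Bn] by simp
      also have "card Bn = card ((\<lambda>n. poly p (real n)) ` Bn)" using card_image[OF Bn_inj] by simp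
      also have "\<dots> \<le> card (poly P1 ` Xr)" using Bn_img Xr_fin by (intro card_mono) auto
      also have "\<dots> \<le> card Xr" using Xr_fin by (rule card_image_le)
      finally show ?thesis unfolding cnt_def DY_def by simp
    qed
    show ?thesis using up low unfolding Xr_def by linarith
  qed
  have Ybig: "\<forall>\<^sub>F r in sequentially. M \<le> Y r" for M :: nat
  proof -
    define r0 where "r0 = nat \<lceil>max (max S R') ((real M + 2 + \<bar>d\<bar>) / c)\<rceil>"
    show ?thesis
    proof (rule eventually_sequentiallyI[of r0])
      fix r assume "r0 \<le> r"
      then have r: "real r \<ge> S" "real r \<ge> (real M + 2 + \<bar>d\<bar>) / c" unfolding r0_def by linarith+
      have "c * real r \<ge> real M + 2 + \<bar>d\<bar>" using r(2) c0 by (simp add: field_simps)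
      then have "ys (real r) \<ge> real M + 1" using ys(3)[OF r(1)] by linarith
      then show "M \<le> Y r" unfolding Y_def by linarith
    qed
  qed
  have Ylim: "filterlim Y at_top sequentially" unfolding filterlim_at_top using Ybig by blast
  have d1: "(\<lambda>r. real (cnt D (Y r)) / real (Y r)) \<longlonglongrightarrow> \<rho>"
    using filterlim_compose[OF dD[unfolded dens_def] Ylim] by (simp add: o_def)
  have d2: "(\<lambda>r. real (Y r) / real r) \<longlonglongrightarrow> c"
  proof (rule bounded_diff_lim[of _ "\<lambda>r. c * real r" "\<bar>d\<bar> + 2"])
    show "\<forall>\<^sub>F r in sequentially. \<bar>real (Y r) - c * real r\<bar> \<le> \<bar>d\<bar> + 2"
    proof (rule eventually_sequentiallyI[of "nat \<lceil>S\<rceil>"])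
      fix r assume "nat \<lceil>S\<rceil> \<le> r"
      then have r: "real r \<ge> S" by linarith
      have "ys (real r) \<ge> Z" using ys r by auto
      then have "real (Y r) = real_of_int \<lfloor>ys (real r)\<rfloor>" unfolding Y_def using cl(1) by simp
      then have "real (Y r) \<le> ys (real r)" "real (Y r) > ys (real r) - 1" by linarith+
      moreover have "\<bar>ys (real r) - (c * real r + d)\<bar> \<le> 1/2" using ys(3)[OF r] .
      ultimately show "\<bar>real (Y r) - c * real r\<bar> \<le> \<bar>d\<bar> + 2" unfolding abs_le_iff by linarith
    qed
    have "\<forall>\<^sub>F r in sequentially. c = c * real r / real r"
      by (rule eventually_sequentiallyI[of 1]) simp
    then show "(\<lambda>r. c * real r / real r) \<longlonglongrightarrow> c" by (rule Lim_transform_eventually[OF tendsto_const])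
  qed
  have d3: "(\<lambda>r. real (cnt D (Y r)) / real r) \<longlonglongrightarrow> c * \<rho>"
  proof -
    have "(\<lambda>r. real (cnt D (Y r)) / real (Y r) * (real (Y r) / real r)) \<longlonglongrightarrow> \<rho> * c"
      by (rule tendsto_mult[OF d1 d2])
    moreover have "\<forall>\<^sub>F r in sequentially. real (cnt D (Y r)) / real (Y r) * (real (Y r) / real r) = real (cnt D (Y r)) / real r"
      using Ybig[of 1] by eventually_elim simp
    ultimately show ?thesis by (simp add: Lim_transform_eventually mult.commute)
  qed
  have ev: "\<forall>\<^sub>F r in sequentially. \<bar>real (card (X \<inter> {1..real r})) - real (cnt D (Y r))\<bar> \<le> real (N1 + N3)"
  proof (rule eventually_sequentiallyI[of "nat \<lceil>max S R'\<rceil>"])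
    fix r assume "nat \<lceil>max S R'\<rceil> \<le> r"
    then have "real r \<ge> max S R'" by linarith
    then show "\<bar>real (card (X \<inter> {1..real r})) - real (cnt D (Y r))\<bar> \<le> real (N1 + N3)" by (rule key)
  qed
  show ?thesis using bounded_diff_lim[OF ev d3] unfolding X_def c_def .
qed




lemma lead_pos:
  fixes p :: "real poly"
  assumes "degree p = m" "m \<ge> 1" and lim: "filterlim (\<lambda>x. poly p x) at_top at_top"
  shows "lead_coeff p > 0"
proof (rule ccontr)
  assume "\<not> lead_coeff p > 0"
  moreover have "p \<noteq> 0" using assms by auto
  then have "lead_coeff p \<noteq> 0" by simp
  moreover have "lead_coeff (-p) = - lead_coeff p" by simp
  ultimately have neg: "lead_coeff (-p) > 0" by linarith
  obtain Z where Z: "Z \<ge> 1" "\<forall>z\<ge>Z. poly (-p) z \<ge> lead_coeff (-p) / 2 * z ^ degree (-p)"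
    using poly_lower_bound[OF neg] by blast
  have "eventually (\<lambda>x. poly p x \<ge> 1) at_top" using lim unfolding filterlim_at_top by blast
  then obtain N where N: "\<forall>x\<ge>N. poly p x \<ge> 1" unfolding eventually_at_top_linorder by blast
  define z where "z = max N Z"
  have "poly (-p) z \<ge> lead_coeff (-p) / 2 * z ^ degree (-p)" using Z z_def by auto
  moreover have "lead_coeff (-p) / 2 * z ^ degree (-p) \<ge> 0"
  proof (rule mult_nonneg_nonneg)
    show "0 \<le> lead_coeff (-p) / 2" using neg by (simp only: divide_nonneg_pos less_imp_le zero_less_numeral)
    show "0 \<le> z ^ degree (-p)" using Z z_def by (intro zero_le_power) auto
  qed
  moreover have "poly p z \<ge> 1" using N z_def by auto
  moreover have "poly (-p) z = - poly p z" by (rule poly_minus)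
  ultimately show False by linarith
qed

lemma cc_recip:
  assumes "lead_coeff (q i) > 0" "lead_coeff (q j) > 0"
  shows "cc q m i j * cc q m j i = 1"
proof -
  have "cc q m i j * cc q m j i = (lead_coeff (q j) / lead_coeff (q i) * (lead_coeff (q i) / lead_coeff (q j))) powr (1 / real m)"
    unfolding cc_def using assms by (intro powr_mult[symmetric])
  also have "lead_coeff (q j) / lead_coeff (q i) * (lead_coeff (q i) / lead_coeff (q j)) = 1"
  proof -
    have "lead_coeff (q i) \<noteq> 0" "lead_coeff (q j) \<noteq> 0" using assms by linarith+
    then show ?thesis by (simp add: field_simps del: leading_coeff_0_iff)
  qed
  also have "(1::real) powr (1 / real m) = 1" by simp
  finally show ?thesis .
qed

lemma cc_pos:
  assumes "lead_coeff (q i) > 0" "lead_coeff (q j) > 0"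
  shows "cc q m i j > 0"
  unfolding cc_def using assms by (auto simp: divide_pos_pos)

lemma cc_self:
  assumes "lead_coeff (q i) > 0"
  shows "cc q m i i = 1"
proof -
  have "q i \<noteq> 0" using assms by auto
  then show ?thesis unfolding cc_def by simp
qed

lemma Aset_fin:
  fixes q :: "nat \<Rightarrow> real poly"
  assumes mono: "strict_mono_on {R..} (poly (q 1))" and L: "lead_coeff (q i) > 0"
    and dg: "degree (q i) \<ge> 1"
  shows "finite (Aset q R i \<inter> {1..real r})"
proof -
  obtain Z where Z: "Z \<ge> 1" "\<forall>z\<ge>Z. poly (q i) z \<ge> lead_coeff (q i) / 2 * z ^ degree (q i)"
    using poly_lower_bound[OF L] by blast
  define L0 where "L0 = nat \<lceil>max Z (2 * \<bar>poly (q 1) (real r)\<bar> / lead_coeff (q i) + 1)\<rceil>"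
  define X where "X = Aset q R i \<inter> {1..real r}"
  have img: "poly (q 1) ` X \<subseteq> (\<lambda>l. poly (q i) (real l)) ` {..L0}"
  proof
    fix v assume "v \<in> poly (q 1) ` X"
    then obtain x where x: "x \<in> X" "v = poly (q 1) x" by auto
    then have xR: "R \<le> x" "x \<le> real r" and "poly (q 1) x \<in> polyvals (q i)"
      unfolding X_def Aset_def by auto
    then obtain l :: nat where l: "l \<ge> 1" "poly (q 1) x = poly (q i) (real l)" by (auto simp: polyvals_iff)
    have le: "poly (q i) (real l) \<le> poly (q 1) (real r)"
      using l strict_mono_on_leD[OF mono, of x "real r"] xR by auto
    have "l \<le> L0"
    proof (rule ccontr)
      assume "\<not> l \<le> L0"
      then have lb: "real l \<ge> Z" "real l > 2 * \<bar>poly (q 1) (real r)\<bar> / lead_coeff (q i)"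
        unfolding L0_def by linarith+
      have "poly (q i) (real l) \<ge> lead_coeff (q i) / 2 * real l ^ degree (q i)" using Z lb by auto
      moreover have "real l ^ degree (q i) \<ge> real l" using lb Z dg
        by (metis power_one_right power_increasing order_trans)
      then have "lead_coeff (q i) / 2 * real l ^ degree (q i) \<ge> lead_coeff (q i) / 2 * real l" using L by simp
      moreover have "lead_coeff (q i) / 2 * real l > \<bar>poly (q 1) (real r)\<bar>"
      proof -
        have "real l * lead_coeff (q i) > 2 * \<bar>poly (q 1) (real r)\<bar>" using lb L by (simp add: pos_divide_less_eq)
        then show ?thesis by (simp add: field_simps)
      qed
      ultimately show False using le by linarith
    qed
    then show "v \<in> (\<lambda>l. poly (q i) (real l)) ` {..L0}" using x l by auto
  qed
  have "inj_on (poly (q 1)) X" using strict_mono_on_imp_inj_on[OF mono] unfolding X_def Aset_def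
    by (rule inj_on_subset) auto
  moreover have "finite (poly (q 1) ` X)" using img by (rule finite_subset) simp
  ultimately show ?thesis unfolding X_def using finite_imageD by blast
qed




definition PropT :: "(nat \<Rightarrow> real poly) \<Rightarrow> nat \<Rightarrow> nat \<Rightarrow> nat set \<Rightarrow> int \<Rightarrow> int \<Rightarrow> bool" where
"PropT q k m T Mv av \<longleftrightarrow> (let t1 = Min T; S = T - {t1} in
        Mv \<ge> 0 \<and> av > 0 \<and> av \<ge> Mv \<and>
        (\<lambda>r. real (card {n \<in> {1..r}. \<forall>i\<in>T. poly (q t1) (real n) \<in> polyvals (q i)}) / real r)
          \<longlonglongrightarrow> real_of_int Mv / real_of_int av \<and>
        (card T = 1 \<longrightarrow> Mv = 1 \<and> av = 1) \<and>
        (card T > 1 \<longrightarrow>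
          (\<forall>\<alpha> \<beta> :: nat \<Rightarrow> nat. \<forall>x :: nat \<Rightarrow> real.
             (\<forall>i\<in>S. \<alpha> i > 0 \<and> \<beta> i > 0 \<and> coprime (\<alpha> i) (\<beta> i) \<and>
                cc q m i t1 = real (\<beta> i) / real (\<alpha> i) \<and> x i \<in> \<rat> \<and>
                (\<forall>y. poly (q i) y = poly (q t1) (cc q m t1 i * (y - x i))))
             \<longrightarrow> av = Lcm ((\<lambda>i. int (\<alpha> i)) ` S) \<and>
                 Mv = int (card {w \<in> PiE S (\<lambda>i. Wset (\<alpha> i) (\<beta> i) (x i)).
                          \<forall>i\<in>S. \<forall>j\<in>S. w i - w j \<in> diffset (\<alpha> j) (\<alpha> i)})) \<and>
          ((\<exists>i\<in>S. cc q m i t1 \<notin> \<rat>) \<or>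
           (\<exists>i\<in>S. cc q m i t1 \<in> \<rat> \<and>
              \<not> (\<exists>xi\<in>\<rat>. \<forall>y. poly (q i) y = poly (q t1) (cc q m t1 i * (y - xi))))
           \<longrightarrow> Mv = 0)) \<and>
        (\<forall>R. (\<forall>i\<in>{1..k}. strict_mono_on {R..} (poly (q i))) \<longrightarrow>
           (\<lambda>r. real (card ((\<Inter>j\<in>T. Aset q R j) \<inter> {1..real r})) / real r)
             \<longlonglongrightarrow> cc q m t1 1 * (real_of_int Mv / real_of_int av)))"

lemma perT:
  fixes q :: "nat \<Rightarrow> real poly" and k m :: nat
  assumes k: "k \<ge> 1" and m: "m \<ge> 1"
    and deg: "\<forall>i\<in>{1..k}. degree (q i) = m"
    and lim: "\<forall>i\<in>{1..k}. filterlim (\<lambda>x. poly (q i) x) at_top at_top"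
    and T: "T \<subseteq> {1..k}" "T \<noteq> {}"
  shows "\<exists>Mv av. PropT q k m T Mv av"
proof -
  define t1 where "t1 = Min T"
  define S where "S = T - {t1}"
  define F where "F = (\<lambda>n. \<forall>i\<in>T. poly (q t1) (real n) \<in> polyvals (q i))"
  have finT: "finite T" using T finite_subset by blast
  have t1T: "t1 \<in> T" unfolding t1_def using finT T by simp
  have t1k: "t1 \<in> {1..k}" using t1T T by auto
  have finS: "finite S" unfolding S_def using finT by simp
  have ST: "S \<subseteq> T" unfolding S_def by auto
  have Sk: "S \<subseteq> {1..k}" using ST T by auto
  have L: "lead_coeff (q i) > 0" if "i \<in> {1..k}" for i
    using lead_pos[of "q i" m] deg lim m that by auto
  have dg: "degree (q i) = m" if "i \<in> {1..k}" for i using deg that by auto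
  have one: "1 \<in> {1..k}" using k by simp
  have Ftriv: "F n \<longleftrightarrow> (\<forall>i\<in>S. poly (q t1) (real n) \<in> polyvals (q i))" if n: "n \<ge> 1" for n
  proof -
    have "poly (q t1) (real n) \<in> polyvals (q t1)" unfolding polyvals_iff using n by auto
    then show ?thesis unfolding F_def S_def by auto
  qed
  have Fset: "{n \<in> {1..r}. \<forall>i\<in>T. poly (q t1) (real n) \<in> polyvals (q i)} = {n \<in> {1..r}. F n}" for r
    unfolding F_def ..
  have R3: "(\<lambda>r. real (card ((\<Inter>j\<in>T. Aset q R j) \<inter> {1..real r})) / real r) \<longlonglongrightarrow> cc q m t1 1 * \<rho>"
    if dF: "dens F \<rho>" and mono: "\<forall>i\<in>{1..k}. strict_mono_on {R..} (poly (q i))" for \<rho> R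
  proof -
    have eq: "(\<Inter>j\<in>T. Aset q R j) = {x. R \<le> x \<and> (\<exists>n::nat. n \<ge> 1 \<and> F n \<and> poly (q 1) x = poly (q t1) (real n))}"
    proof (intro equalityI subsetI)
      fix x assume x: "x \<in> (\<Inter>j\<in>T. Aset q R j)"
      then have "x \<in> Aset q R t1" using t1T by blast
      then obtain l :: nat where l: "R \<le> x" "l \<ge> 1" "poly (q 1) x = poly (q t1) (real l)"
        unfolding Aset_def by (auto simp: polyvals_iff)
      have "F l" unfolding F_def using x l unfolding Aset_def by auto
      then show "x \<in> {x. R \<le> x \<and> (\<exists>n::nat. n \<ge> 1 \<and> F n \<and> poly (q 1) x = poly (q t1) (real n))}"
        using l by auto
    next
      fix x assume "x \<in> {x. R \<le> x \<and> (\<exists>n::nat. n \<ge> 1 \<and> F n \<and> poly (q 1) x = poly (q t1) (real n))}"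
      then obtain n :: nat where "R \<le> x" "n \<ge> 1" "F n" "poly (q 1) x = poly (q t1) (real n)" by auto
      then show "x \<in> (\<Inter>j\<in>T. Aset q R j)" unfolding Aset_def F_def by auto
    qed
    have "(\<lambda>r. real (card ({x. R \<le> x \<and> (\<exists>n::nat. n \<ge> 1 \<and> F n \<and> poly (q 1) x = poly (q t1) (real n))} \<inter> {1..real r}))
            / real r) \<longlonglongrightarrow> (lead_coeff (q 1) / lead_coeff (q t1)) powr (1 / real m) * \<rho>"
      by (rule transfer[OF m dg[OF one] dg[OF t1k] L[OF one] L[OF t1k]])
         (use mono one dF in auto)
    then show ?thesis unfolding eq cc_def .
  qed
  define HYP where "HYP = (\<lambda>(\<alpha>::nat \<Rightarrow> nat) (\<beta>::nat \<Rightarrow> nat) (x::nat \<Rightarrow> real).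
      \<forall>i\<in>S. \<alpha> i > 0 \<and> \<beta> i > 0 \<and> coprime (\<alpha> i) (\<beta> i) \<and>
                cc q m i t1 = real (\<beta> i) / real (\<alpha> i) \<and> x i \<in> \<rat> \<and>
                (\<forall>y. poly (q i) y = poly (q t1) (cc q m t1 i * (y - x i))))"
  define Tg where "Tg = (\<lambda>(\<alpha>::nat \<Rightarrow> nat) (\<beta>::nat \<Rightarrow> nat) (x::nat \<Rightarrow> real).
      {w \<in> PiE S (\<lambda>i. Wset (\<alpha> i) (\<beta> i) (x i)). \<forall>i\<in>S. \<forall>j\<in>S. w i - w j \<in> diffset (\<alpha> j) (\<alpha> i)})"
  have hypdens: "dens F (real (card (Tg \<alpha> \<beta> x)) / real (Lcm (\<alpha> ` S))) \<and> card (Tg \<alpha> \<beta> x) \<le> Lcm (\<alpha> ` S)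
      \<and> Lcm (\<alpha> ` S) > 0"
    if H: "HYP \<alpha> \<beta> x" for \<alpha> \<beta> x
  proof -
    have ab: "\<forall>i\<in>S. \<alpha> i > 0 \<and> \<beta> i > 0" using H unfolding HYP_def by auto
    have "\<exists>N. \<forall>n\<ge>N. (poly (q t1) (real n) \<in> polyvals (q i) \<longleftrightarrow> Pz (\<alpha> i) (\<beta> i) (x i) n)"
      if i: "i \<in> S" for i
    proof -
      have ik: "i \<in> {1..k}" using i Sk by auto
      have Hi: "\<alpha> i > 0" "\<beta> i > 0" "cc q m i t1 = real (\<beta> i) / real (\<alpha> i)"
        "\<forall>y. poly (q i) y = poly (q t1) (cc q m t1 i * (y - x i))"
        using H i unfolding HYP_def by auto
      have "cc q m t1 i * cc q m i t1 = 1" by (rule cc_recip[OF L[OF t1k] L[OF ik]])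
      then have c2: "cc q m t1 i = real (\<alpha> i) / real (\<beta> i)" using Hi by (simp add: field_simps)
      have cb: "(lead_coeff (q t1) / lead_coeff (q i)) powr (1 / real m) = real (\<beta> i) / real (\<alpha> i)"
        using Hi(3) unfolding cc_def .
      from ident_char[OF m dg[OF t1k] dg[OF ik] L[OF t1k] L[OF ik] Hi(1) Hi(2) cb] Hi(4) c2
      show ?thesis unfolding Pz_def by auto
    qed
    then obtain Nf where Nf: "\<forall>i\<in>S. \<forall>n\<ge>Nf i. (poly (q t1) (real n) \<in> polyvals (q i) \<longleftrightarrow> Pz (\<alpha> i) (\<beta> i) (x i) n)"
      by metis
    define N0 where "N0 = Max (insert 1 (Nf ` S))"
    have N0: "Nf i \<le> N0" "1 \<le> N0" if "i \<in> S" for i unfolding N0_def using finS that by auto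
    have N01: "1 \<le> N0" unfolding N0_def using finS by auto
    have ev: "\<forall>n\<ge>N0. F n \<longleftrightarrow> (\<forall>i\<in>S. Pz (\<alpha> i) (\<beta> i) (x i) n)"
    proof (intro allI impI)
      fix n assume n: "N0 \<le> n"
      then have "F n \<longleftrightarrow> (\<forall>i\<in>S. poly (q t1) (real n) \<in> polyvals (q i))" using Ftriv N01 by auto
      also have "\<dots> \<longleftrightarrow> (\<forall>i\<in>S. Pz (\<alpha> i) (\<beta> i) (x i) n)" using Nf N0 n by (meson order_trans)
      finally show "F n \<longleftrightarrow> (\<forall>i\<in>S. Pz (\<alpha> i) (\<beta> i) (x i) n)" .
    qed
    from case1_dens[OF finS ab ev] show ?thesis unfolding Tg_def by auto
  qed
  have alpha_uniq: "\<forall>i\<in>S. \<alpha> i = \<alpha>' i" if "HYP \<alpha> \<beta> x" "HYP \<alpha>' \<beta>' x'" for \<alpha> \<beta> x \<alpha>' \<beta>' x'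
  proof
    fix i assume i: "i \<in> S"
    have h: "\<alpha> i > 0" "\<beta> i > 0" "coprime (\<alpha> i) (\<beta> i)" "cc q m i t1 = real (\<beta> i) / real (\<alpha> i)"
         "\<alpha>' i > 0" "\<beta>' i > 0" "coprime (\<alpha>' i) (\<beta>' i)" "cc q m i t1 = real (\<beta>' i) / real (\<alpha>' i)"
      using that i unfolding HYP_def by auto
    have "real (\<beta> i) * real (\<alpha>' i) = real (\<beta>' i) * real (\<alpha> i)" using h by (simp add: field_simps)
    then have e: "\<beta> i * \<alpha>' i = \<beta>' i * \<alpha> i" by (metis of_nat_eq_iff of_nat_mult)
    have "coprime (\<beta> i) (\<alpha> i)" "coprime (\<beta>' i) (\<alpha>' i)" using h by (auto simp: coprime_commute)
    from coprime_crossproduct_nat[OF this] e show "\<alpha> i = \<alpha>' i" by simp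
  qed
  show ?thesis
  proof (cases "card T = 1")
    case True
    then have Tt: "T = {t1}" using t1T by (metis card_1_singletonE singletonD)
    have "dens F 1" using Ftriv unfolding S_def Tt by (intro dens_true) auto
    then have dF: "(\<lambda>r. real (card {n \<in> {1..r}. \<forall>i\<in>T. poly (q t1) (real n) \<in> polyvals (q i)}) / real r) \<longlonglongrightarrow> 1"
      unfolding Fset dens_def cnt_def .
    show ?thesis
      by (rule exI[of _ 1], rule exI[of _ 1])
         (use True dF R3[OF \<open>dens F 1\<close>] in \<open>simp add: PropT_def Let_def t1_def[symmetric] S_def[symmetric]\<close>)
  next
    case False
    then have cT: "card T > 1" using T finT by (metis card_0_eq less_one linorder_neqE_nat)
    show ?thesis
    proof (cases "\<exists>\<alpha> \<beta> x. HYP \<alpha> \<beta> x")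
      case True
      then obtain \<alpha> \<beta> x where H: "HYP \<alpha> \<beta> x" by blast
      define Mv where "Mv = int (card (Tg \<alpha> \<beta> x))"
      define av where "av = Lcm ((\<lambda>i. int (\<alpha> i)) ` S)"
      have avL: "av = int (Lcm (\<alpha> ` S))" unfolding av_def by (metis Lcm_int_eq image_image)
      have hd: "dens F (real (card (Tg \<alpha> \<beta> x)) / real (Lcm (\<alpha> ` S)))" "card (Tg \<alpha> \<beta> x) \<le> Lcm (\<alpha> ` S)"
        "Lcm (\<alpha> ` S) > 0" using hypdens[OF H] by auto
      have dF: "dens F (real_of_int Mv / real_of_int av)" using hd(1) unfolding Mv_def avL by simp
      have c1: "av = Lcm ((\<lambda>i. int (\<alpha>' i)) ` S) \<and> Mv = int (card (Tg \<alpha>' \<beta>' x'))"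
        if H': "HYP \<alpha>' \<beta>' x'" for \<alpha>' \<beta>' x'
      proof
        have au: "\<forall>i\<in>S. \<alpha> i = \<alpha>' i" using alpha_uniq[OF H H'] .
        then have im: "\<alpha> ` S = \<alpha>' ` S" by (auto intro: image_cong)
        show "av = Lcm ((\<lambda>i. int (\<alpha>' i)) ` S)" unfolding av_def using au
          by (metis (no_types, lifting) image_cong)
        have hd': "dens F (real (card (Tg \<alpha>' \<beta>' x')) / real (Lcm (\<alpha>' ` S)))" using hypdens[OF H'] by auto
        have "real (card (Tg \<alpha> \<beta> x)) / real (Lcm (\<alpha> ` S)) = real (card (Tg \<alpha>' \<beta>' x')) / real (Lcm (\<alpha>' ` S))"
          using hd(1) hd' unfolding dens_def by (rule LIMSEQ_unique)
        then have "card (Tg \<alpha> \<beta> x) = card (Tg \<alpha>' \<beta>' x')" using hd(3) unfolding im by (simp add: field_simps)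
        then show "Mv = int (card (Tg \<alpha>' \<beta>' x'))" unfolding Mv_def by simp
      qed
      have c2: "\<not> ((\<exists>i\<in>S. cc q m i t1 \<notin> \<rat>) \<or>
           (\<exists>i\<in>S. cc q m i t1 \<in> \<rat> \<and>
              \<not> (\<exists>xi\<in>\<rat>. \<forall>y. poly (q i) y = poly (q t1) (cc q m t1 i * (y - xi)))))"
      proof -
        have "cc q m i t1 \<in> \<rat>" if "i \<in> S" for i using H that unfolding HYP_def by auto
        moreover have "\<exists>xi\<in>\<rat>. \<forall>y. poly (q i) y = poly (q t1) (cc q m t1 i * (y - xi))" if "i \<in> S" for i
          using H that unfolding HYP_def by auto
        ultimately show ?thesis by blast
      qed
      have "PropT q k m T Mv av"
        unfolding PropT_def Let_def t1_def[symmetric] S_def[symmetric]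
      proof (intro conjI impI allI)
        show "Mv \<ge> 0" unfolding Mv_def by simp
        show "av > 0" using hd(3) avL by simp
        show "av \<ge> Mv" using hd(2) avL unfolding Mv_def by simp
        show "(\<lambda>r. real (card {n \<in> {1..r}. \<forall>i\<in>T. poly (q t1) (real n) \<in> polyvals (q i)}) / real r)
          \<longlonglongrightarrow> real_of_int Mv / real_of_int av" using dF unfolding Fset dens_def cnt_def .
        show "Mv = 1" "av = 1" if "card T = 1" using that cT by auto
        fix \<alpha>' \<beta>' x' assume "\<forall>i\<in>S. \<alpha>' i > 0 \<and> \<beta>' i > 0 \<and> coprime (\<alpha>' i) (\<beta>' i) \<and>
                cc q m i t1 = real (\<beta>' i) / real (\<alpha>' i) \<and> x' i \<in> \<rat> \<and>
                (\<forall>y. poly (q i) y = poly (q t1) (cc q m t1 i * (y - x' i)))"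
        then have H': "HYP \<alpha>' \<beta>' x'" unfolding HYP_def .
        show "av = Lcm ((\<lambda>i. int (\<alpha>' i)) ` S)" using c1[OF H'] by simp
        show "Mv = int (card {w \<in> PiE S (\<lambda>i. Wset (\<alpha>' i) (\<beta>' i) (x' i)). \<forall>i\<in>S. \<forall>j\<in>S. w i - w j \<in> diffset (\<alpha>' j) (\<alpha>' i)})"
          using c1[OF H'] unfolding Tg_def by simp
      next
        assume "(\<exists>i\<in>S. cc q m i t1 \<notin> \<rat>) \<or>
           (\<exists>i\<in>S. cc q m i t1 \<in> \<rat> \<and>
              \<not> (\<exists>xi\<in>\<rat>. \<forall>y. poly (q i) y = poly (q t1) (cc q m t1 i * (y - xi))))"
        then show "Mv = 0" using c2 by blast
      next
        fix R assume "\<forall>i\<in>{1..k}. strict_mono_on {R..} (poly (q i))"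
        then show "(\<lambda>r. real (card ((\<Inter>j\<in>T. Aset q R j) \<inter> {1..real r})) / real r)
             \<longlonglongrightarrow> cc q m t1 1 * (real_of_int Mv / real_of_int av)" using R3[OF dF] by blast
      qed
      then show ?thesis by blast
    next
      case False
      have ex: "\<exists>i\<in>S. cc q m i t1 \<notin> \<rat> \<or>
                  \<not> (\<exists>xi\<in>\<rat>. \<forall>y. poly (q i) y = poly (q t1) (cc q m t1 i * (y - xi)))"
      proof (rule ccontr)
        assume "\<not> ?thesis"
        then have all: "\<forall>i\<in>S. cc q m i t1 \<in> \<rat> \<and> (\<exists>xi\<in>\<rat>. \<forall>y. poly (q i) y = poly (q t1) (cc q m t1 i * (y - xi)))"
          by blast
        have "\<forall>i. \<exists>t::nat \<times> nat \<times> real. i \<in> S \<longrightarrow> (fst t > 0 \<and> fst (snd t) > 0 \<and> coprime (fst t) (fst (snd t)) \<and>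
                cc q m i t1 = real (fst (snd t)) / real (fst t) \<and> snd (snd t) \<in> \<rat> \<and>
                (\<forall>y. poly (q i) y = poly (q t1) (cc q m t1 i * (y - snd (snd t)))))"
        proof
          fix i
          show "\<exists>t::nat \<times> nat \<times> real. i \<in> S \<longrightarrow> (fst t > 0 \<and> fst (snd t) > 0 \<and> coprime (fst t) (fst (snd t)) \<and>
                cc q m i t1 = real (fst (snd t)) / real (fst t) \<and> snd (snd t) \<in> \<rat> \<and>
                (\<forall>y. poly (q i) y = poly (q t1) (cc q m t1 i * (y - snd (snd t)))))"
          proof (cases "i \<in> S")
            case False then show ?thesis by simp
          next
            case True
            have ik: "i \<in> {1..k}" using True Sk by auto
            have cpos: "cc q m i t1 > 0" by (rule cc_pos[OF L[OF ik] L[OF t1k]])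
            obtain xi where xi: "xi \<in> \<rat>" "\<forall>y. poly (q i) y = poly (q t1) (cc q m t1 i * (y - xi))"
              using all True by blast
            obtain mm nn :: nat where mn: "nn \<noteq> 0" "\<bar>cc q m i t1\<bar> = real mm / real nn" "coprime mm nn"
              using all True by (meson Rats_abs_nat_div_natE)
            have c: "cc q m i t1 = real mm / real nn" using mn cpos by simp
            then have "mm > 0" using cpos mn by (cases "mm = 0") auto
            then show ?thesis using mn c xi
              by (intro exI[of _ "(nn, mm, xi)"]) (auto simp: coprime_commute)
          qed
        qed
        then obtain f where f: "\<forall>i. i \<in> S \<longrightarrow> (fst (f i) > 0 \<and> fst (snd (f i)) > 0 \<and> coprime (fst (f i)) (fst (snd (f i))) \<and>
                cc q m i t1 = real (fst (snd (f i))) / real (fst (f i)) \<and> snd (snd (f i)) \<in> \<rat> \<and>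
                (\<forall>y. poly (q i) y = poly (q t1) (cc q m t1 i * (y - snd (snd (f i))))))"
          by (metis choice)
        have "HYP (\<lambda>i. fst (f i)) (\<lambda>i. fst (snd (f i))) (\<lambda>i. snd (snd (f i)))"
          unfolding HYP_def using f by blast
        then show False using False by blast
      qed
      then obtain i where i: "i \<in> S" and alt: "cc q m i t1 \<notin> \<rat> \<or>
                  \<not> (\<exists>xi\<in>\<rat>. \<forall>y. poly (q i) y = poly (q t1) (cc q m t1 i * (y - xi)))" by blast
      have ik: "i \<in> {1..k}" using i Sk by auto
      have iT: "i \<in> T" using i ST by auto
      have sub: "\<forall>n. F n \<longrightarrow> poly (q t1) (real n) \<in> polyvals (q i)" unfolding F_def using iT by auto
      have dE: "dens (\<lambda>n. poly (q t1) (real n) \<in> polyvals (q i)) 0"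
      proof (cases "cc q m i t1 \<in> \<rat>")
        case False
        then show ?thesis
          by (intro irr_dens0[OF m dg[OF t1k] dg[OF ik] L[OF t1k] L[OF ik]]) (simp add: cc_def)
      next
        case True
        with alt have noid: "\<not> (\<exists>xi\<in>\<rat>. \<forall>y. poly (q i) y = poly (q t1) (cc q m t1 i * (y - xi)))" by blast
        have "finite {n::nat. poly (q t1) (real n) \<in> polyvals (q i)}"
        proof (rule ccontr)
          assume inf: "infinite {n::nat. poly (q t1) (real n) \<in> polyvals (q i)}"
          have rat: "(lead_coeff (q t1) / lead_coeff (q i)) powr (1 / real m) \<in> \<rat>" using True by (simp add: cc_def)
          from rat_ident[OF m dg[OF t1k] dg[OF ik] L[OF t1k] L[OF ik] rat inf]
          obtain d where d: "d \<in> \<rat>" "\<forall>y. poly (q i) (cc q m i t1 * y + d) = poly (q t1) y"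
            unfolding cc_def by blast
          have rc: "cc q m i t1 * cc q m t1 i = 1" by (rule cc_recip[OF L[OF ik] L[OF t1k]])
          have "\<forall>y. poly (q i) y = poly (q t1) (cc q m t1 i * (y - d))"
          proof
            fix y
            have "cc q m i t1 * (cc q m t1 i * (y - d)) + d = y" using rc by (simp add: mult.assoc[symmetric])
            then show "poly (q i) y = poly (q t1) (cc q m t1 i * (y - d))" using d(2) by metis
          qed
          then show False using noid d(1) by blast
        qed
        then show ?thesis by (rule dens_finite)
      qed
      have dF: "dens F 0" using dens_zero_sub[OF sub dE] .
      have "PropT q k m T 0 1"
        unfolding PropT_def Let_def t1_def[symmetric] S_def[symmetric]
      proof (intro conjI impI allI)
        show "(\<lambda>r. real (card {n \<in> {1..r}. \<forall>i\<in>T. poly (q t1) (real n) \<in> polyvals (q i)}) / real r)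
          \<longlonglongrightarrow> real_of_int 0 / real_of_int 1" using dF unfolding Fset dens_def cnt_def by simp
        show "(0::int) = 1" "(1::int) = 1" if "card T = 1" using that cT by auto
        fix \<alpha>' \<beta>' x' assume "\<forall>i\<in>S. \<alpha>' i > 0 \<and> \<beta>' i > 0 \<and> coprime (\<alpha>' i) (\<beta>' i) \<and>
                cc q m i t1 = real (\<beta>' i) / real (\<alpha>' i) \<and> x' i \<in> \<rat> \<and>
                (\<forall>y. poly (q i) y = poly (q t1) (cc q m t1 i * (y - x' i)))"
        then have "HYP \<alpha>' \<beta>' x'" unfolding HYP_def .
        then show "(1::int) = Lcm ((\<lambda>i. int (\<alpha>' i)) ` S)" using False by blast
        show "(0::int) = int (card {w \<in> PiE S (\<lambda>i. Wset (\<alpha>' i) (\<beta>' i) (x' i)). \<forall>i\<in>S. \<forall>j\<in>S. w i - w j \<in> diffset (\<alpha>' j) (\<alpha>' i)})"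
          using False \<open>HYP \<alpha>' \<beta>' x'\<close> by blast
      next
        fix R assume "\<forall>i\<in>{1..k}. strict_mono_on {R..} (poly (q i))"
        then show "(\<lambda>r. real (card ((\<Inter>j\<in>T. Aset q R j) \<inter> {1..real r})) / real r)
             \<longlonglongrightarrow> cc q m t1 1 * (real_of_int 0 / real_of_int 1)" using R3[OF dF] by simp
      qed simp_all
      then show ?thesis by blast
    qed
  qed
qed




lemma int_card_UNION_idx:
  assumes "finite A" "\<forall>a\<in>A. finite (X a)"
  shows "int (card (\<Union>(X ` A))) = (\<Sum>B | B \<subseteq> A \<and> B \<noteq> {}. (- 1) ^ (card B + 1) * int (card (\<Inter>(X ` B))))"
proof -
  interpret Incl_Excl finite "int o card"
    proof qed (auto simp add: card_Un_disjnt)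
  show ?thesis using restricted_indexed[of A X] assms by simp
qed

theorem lemma4p1:
  fixes q :: "nat \<Rightarrow> real poly" and k m :: nat
  assumes k: "k \<ge> 1" and m: "m \<ge> 1"
    and deg: "\<forall>i\<in>{1..k}. degree (q i) = m"
    and lim: "\<forall>i\<in>{1..k}. filterlim (\<lambda>x. poly (q i) x) at_top at_top"
  shows "\<exists>M a :: nat set \<Rightarrow> int.
    (\<forall>T. T \<subseteq> {1..k} \<and> T \<noteq> {} \<longrightarrow>
      (let t1 = Min T; S = T - {t1} in
        M T \<ge> 0 \<and> a T > 0 \<and> a T \<ge> M T \<and>
        (\<lambda>r. real (card {n \<in> {1..r}. \<forall>i\<in>T. poly (q t1) (real n) \<in> polyvals (q i)}) / real r)
          \<longlonglongrightarrow> real_of_int (M T) / real_of_int (a T) \<and>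
        (card T = 1 \<longrightarrow> M T = 1 \<and> a T = 1) \<and>
        (card T > 1 \<longrightarrow>
          (\<forall>\<alpha> \<beta> :: nat \<Rightarrow> nat. \<forall>x :: nat \<Rightarrow> real.
             (\<forall>i\<in>S. \<alpha> i > 0 \<and> \<beta> i > 0 \<and> coprime (\<alpha> i) (\<beta> i) \<and>
                cc q m i t1 = real (\<beta> i) / real (\<alpha> i) \<and> x i \<in> \<rat> \<and>
                (\<forall>y. poly (q i) y = poly (q t1) (cc q m t1 i * (y - x i))))
             \<longrightarrow> a T = Lcm ((\<lambda>i. int (\<alpha> i)) ` S) \<and>
                 M T = int (card {w \<in> PiE S (\<lambda>i. Wset (\<alpha> i) (\<beta> i) (x i)).
                          \<forall>i\<in>S. \<forall>j\<in>S. w i - w j \<in> diffset (\<alpha> j) (\<alpha> i)})) \<and>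
          ((\<exists>i\<in>S. cc q m i t1 \<notin> \<rat>) \<or>
           (\<exists>i\<in>S. cc q m i t1 \<in> \<rat> \<and>
              \<not> (\<exists>xi\<in>\<rat>. \<forall>y. poly (q i) y = poly (q t1) (cc q m t1 i * (y - xi))))
           \<longrightarrow> M T = 0)) \<and>
        (\<forall>R. (\<forall>i\<in>{1..k}. strict_mono_on {R..} (poly (q i))) \<longrightarrow>
           (\<lambda>r. real (card ((\<Inter>j\<in>T. Aset q R j) \<inter> {1..real r})) / real r)
             \<longlonglongrightarrow> cc q m t1 1 * (real_of_int (M T) / real_of_int (a T))))) \<and>
    (\<forall>R. (\<forall>i\<in>{1..k}. strict_mono_on {R..} (poly (q i))) \<longrightarrow>
       (let c = (\<Sum>T | T \<subseteq> {1..k} \<and> T \<noteq> {}.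
                   (-1) ^ (card T + 1) * cc q m (Min T) 1 * (real_of_int (M T) / real_of_int (a T)))
        in (\<lambda>r. real (card ((\<Union>i\<in>{1..k}. Aset q R i) \<inter> {1..real r})) / real r) \<longlonglongrightarrow> c
           \<and> c \<ge> 1))"
proof -
  have "\<forall>T. \<exists>p::int \<times> int. T \<subseteq> {1..k} \<and> T \<noteq> {} \<longrightarrow> PropT q k m T (fst p) (snd p)"
    using perT[OF k m deg lim] by fastforce
  then obtain f where f: "\<forall>T. T \<subseteq> {1..k} \<and> T \<noteq> {} \<longrightarrow> PropT q k m T (fst (f T)) (snd (f T))"
    by (metis choice)
  define M where "M = (\<lambda>T. fst (f T))"
  define a where "a = (\<lambda>T. snd (f T))"
  have P: "PropT q k m T (M T) (a T)" if "T \<subseteq> {1..k}" "T \<noteq> {}" for T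
    using f that unfolding M_def a_def by blast
  have L: "lead_coeff (q i) > 0" if "i \<in> {1..k}" for i
    using lead_pos[of "q i" m] deg lim m that by auto
  have one: "1 \<in> {1..k}" using k by simp
  have dg1: "degree (q i) \<ge> 1" if "i \<in> {1..k}" for i using deg m that by auto
  show ?thesis
  proof (intro exI conjI)
    show "\<forall>T. T \<subseteq> {1..k} \<and> T \<noteq> {} \<longrightarrow> (let t1 = Min T; S = T - {t1} in
        M T \<ge> 0 \<and> a T > 0 \<and> a T \<ge> M T \<and>
        (\<lambda>r. real (card {n \<in> {1..r}. \<forall>i\<in>T. poly (q t1) (real n) \<in> polyvals (q i)}) / real r)
          \<longlonglongrightarrow> real_of_int (M T) / real_of_int (a T) \<and>
        (card T = 1 \<longrightarrow> M T = 1 \<and> a T = 1) \<and>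
        (card T > 1 \<longrightarrow>
          (\<forall>\<alpha> \<beta> :: nat \<Rightarrow> nat. \<forall>x :: nat \<Rightarrow> real.
             (\<forall>i\<in>S. \<alpha> i > 0 \<and> \<beta> i > 0 \<and> coprime (\<alpha> i) (\<beta> i) \<and>
                cc q m i t1 = real (\<beta> i) / real (\<alpha> i) \<and> x i \<in> \<rat> \<and>
                (\<forall>y. poly (q i) y = poly (q t1) (cc q m t1 i * (y - x i))))
             \<longrightarrow> a T = Lcm ((\<lambda>i. int (\<alpha> i)) ` S) \<and>
                 M T = int (card {w \<in> PiE S (\<lambda>i. Wset (\<alpha> i) (\<beta> i) (x i)).
                          \<forall>i\<in>S. \<forall>j\<in>S. w i - w j \<in> diffset (\<alpha> j) (\<alpha> i)})) \<and>
          ((\<exists>i\<in>S. cc q m i t1 \<notin> \<rat>) \<or>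
           (\<exists>i\<in>S. cc q m i t1 \<in> \<rat> \<and>
              \<not> (\<exists>xi\<in>\<rat>. \<forall>y. poly (q i) y = poly (q t1) (cc q m t1 i * (y - xi))))
           \<longrightarrow> M T = 0)) \<and>
        (\<forall>R. (\<forall>i\<in>{1..k}. strict_mono_on {R..} (poly (q i))) \<longrightarrow>
           (\<lambda>r. real (card ((\<Inter>j\<in>T. Aset q R j) \<inter> {1..real r})) / real r)
             \<longlonglongrightarrow> cc q m t1 1 * (real_of_int (M T) / real_of_int (a T))))"
      using P unfolding PropT_def by blast
    show "\<forall>R. (\<forall>i\<in>{1..k}. strict_mono_on {R..} (poly (q i))) \<longrightarrow>
       (let c = (\<Sum>T | T \<subseteq> {1..k} \<and> T \<noteq> {}.
                   (-1) ^ (card T + 1) * cc q m (Min T) 1 * (real_of_int (M T) / real_of_int (a T)))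
        in (\<lambda>r. real (card ((\<Union>i\<in>{1..k}. Aset q R i) \<inter> {1..real r})) / real r) \<longlonglongrightarrow> c
           \<and> c \<ge> 1)"
    proof (intro allI impI)
      fix R assume mono: "\<forall>i\<in>{1..k}. strict_mono_on {R..} (poly (q i))"
      have mono1: "strict_mono_on {R..} (poly (q 1))" using mono one by blast
      define Y where "Y = (\<lambda>r i. Aset q R i \<inter> {1..real r})"
      have finY: "finite (Y r i)" if "i \<in> {1..k}" for r i
        unfolding Y_def by (rule Aset_fin[OF mono1 L[OF that] dg1[OF that]])
      define \<T> where "\<T> = {T. T \<subseteq> {1..k} \<and> T \<noteq> {}}"
      have finTT: "finite \<T>" unfolding \<T>_def by simp
      have lim3: "(\<lambda>r. real (card ((\<Inter>j\<in>T. Aset q R j) \<inter> {1..real r})) / real r)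
             \<longlonglongrightarrow> cc q m (Min T) 1 * (real_of_int (M T) / real_of_int (a T))" if "T \<in> \<T>" for T
        using P[of T] that mono unfolding \<T>_def PropT_def Let_def by blast
      have Ueq: "(\<Union>i\<in>{1..k}. Aset q R i) \<inter> {1..real r} = \<Union>(Y r ` {1..k})" for r
        unfolding Y_def by auto
      have Ieq: "\<Inter>(Y r ` T) = (\<Inter>j\<in>T. Aset q R j) \<inter> {1..real r}" if "T \<noteq> {}" for T r
        unfolding Y_def using that by auto
      have cardU: "real (card ((\<Union>i\<in>{1..k}. Aset q R i) \<inter> {1..real r})) / real r =
          (\<Sum>T\<in>\<T>. (-1) ^ (card T + 1) * (real (card ((\<Inter>j\<in>T. Aset q R j) \<inter> {1..real r})) / real r))" for r
      proof -
        have "int (card (\<Union>(Y r ` {1..k}))) = (\<Sum>B\<in>\<T>. (- 1) ^ (card B + 1) * int (card (\<Inter>(Y r ` B))))"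
          unfolding \<T>_def by (rule int_card_UNION_idx) (use finY in auto)
        then have "real_of_int (int (card (\<Union>(Y r ` {1..k})))) = real_of_int (\<Sum>B\<in>\<T>. (- 1) ^ (card B + 1) * int (card (\<Inter>(Y r ` B))))"
          by (rule arg_cong)
        then have "real (card (\<Union>(Y r ` {1..k}))) = (\<Sum>B\<in>\<T>. (- 1) ^ (card B + 1) * real (card (\<Inter>(Y r ` B))))"
          by (simp add: of_int_sum)
        also have "\<dots> = (\<Sum>B\<in>\<T>. (- 1) ^ (card B + 1) * real (card ((\<Inter>j\<in>B. Aset q R j) \<inter> {1..real r})))"
          by (intro sum.cong refl) (auto simp: \<T>_def Ieq)
        finally show ?thesis unfolding Ueq by (simp add: sum_divide_distrib)
      qed
      define c where "c = (\<Sum>T | T \<subseteq> {1..k} \<and> T \<noteq> {}.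
                   (-1) ^ (card T + 1) * cc q m (Min T) 1 * (real_of_int (M T) / real_of_int (a T)))"
      have limU: "(\<lambda>r. real (card ((\<Union>i\<in>{1..k}. Aset q R i) \<inter> {1..real r})) / real r) \<longlonglongrightarrow> c"
      proof -
        have "(\<lambda>r. \<Sum>T\<in>\<T>. (-1) ^ (card T + 1) * (real (card ((\<Inter>j\<in>T. Aset q R j) \<inter> {1..real r})) / real r))
               \<longlonglongrightarrow> (\<Sum>T\<in>\<T>. (-1) ^ (card T + 1) * (cc q m (Min T) 1 * (real_of_int (M T) / real_of_int (a T))))"
          by (intro tendsto_sum tendsto_mult_left lim3)
        then show ?thesis unfolding cardU c_def \<T>_def by (simp add: mult.assoc)
      qed
      have c1: "c \<ge> 1"
      proof -
        have T1: "{1} \<in> \<T>" unfolding \<T>_def using one by auto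
        have Pa: "M {1} = 1 \<and> a {1} = 1" using P[of "{1}"] one unfolding PropT_def Let_def by auto
        have l1: "(\<lambda>r. real (card (Aset q R 1 \<inter> {1..real r})) / real r) \<longlonglongrightarrow> 1"
          using lim3[OF T1] Pa cc_self[of q 1 m, OF L[OF one]] by simp
        show ?thesis
        proof (rule LIMSEQ_le[OF l1 limU], intro exI allI impI)
          fix r :: nat
          have "finite (\<Union>(Y r ` {1..k}))" using finY by auto
          moreover have "Aset q R 1 \<inter> {1..real r} \<subseteq> \<Union>(Y r ` {1..k})" unfolding Y_def using one by auto
          ultimately have "card (Aset q R 1 \<inter> {1..real r}) \<le> card ((\<Union>i\<in>{1..k}. Aset q R i) \<inter> {1..real r})"
            unfolding Ueq by (rule card_mono)
          then show "real (card (Aset q R 1 \<inter> {1..real r})) / real r \<le>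
                real (card ((\<Union>i\<in>{1..k}. Aset q R i) \<inter> {1..real r})) / real r"
            by (intro divide_right_mono) auto
        qed
      qed
      show "let c = (\<Sum>T | T \<subseteq> {1..k} \<and> T \<noteq> {}.
                   (-1) ^ (card T + 1) * cc q m (Min T) 1 * (real_of_int (M T) / real_of_int (a T)))
        in (\<lambda>r. real (card ((\<Union>i\<in>{1..k}. Aset q R i) \<inter> {1..real r})) / real r) \<longlonglongrightarrow> c
           \<and> c \<ge> 1"
        unfolding Let_def using limU c1 unfolding c_def by (rule conjI)
    qed
  qed
qed


end
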